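(* Let $K$ be an algebraically closed field and let $d,n$ be integers with $1<d<n$, $\gcd(n,d)=1$ and $\operatorname{char}(K)\nmid d$. Let $m_0:=d\cdot\lfloor (n+d)/d\rfloor$ (the unique integer strictly between $n$ and $n+d$ divisible by $d$) and $\ell_0:=\lfloor (n+d)/d\rfloor=m_0/d$. If $n-m_0+\ell_0<0$, then $m_0$ is not $(n,d)$-reachable over $K$.
   Context: For a polynomial $f(x)\in K[x]$ of degree $n$ without repeated roots, $\mathcal{C}_{f,d}$ denotes the smooth projective model of the affine curve $y^d=f(x)$; it has a unique point at infinity $O$. $\mathcal{C}_{f,d}$ is identified with its image in its Jacobian $J(\mathcal{C}_{f,d})$ via $Q\mapsto \operatorname{cl}((Q)-(O))$ (linear equivalence class), and a point $Q\in\mathcal{C}_{f,d}(K)$ has order $m$ if $\operatorname{cl}((Q)-(O))$ has order $m$ in $J(\mathcal{C}_{f,d})(K)$. An integer $m>1$ is called $(n,d)$-reachable over $K$ if there exists a monic polynomial $f(x)\in K[x]$ of degree $n$ without repeated roots such that $\mathcal{C}_{f,d}(K)$ contains a point of order $m$. *)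

theory Defs
  imports "HOL-Computational_Algebra.Polynomial"
begin

(* Elements of the affine coordinate ring A = K[x,y]/(y^d - f) are represented by
   bivariate polynomials g :: 'a poly poly (a polynomial in y whose coefficients are
   polynomials in x).  Two representatives are equal in A iff (y^d - f) divides
   their difference. *)

definition curve_eq :: "'a::field poly \<Rightarrow> nat \<Rightarrow> 'a poly poly" where
  "curve_eq f d = monom 1 d - [:f:]"

definition eval2 :: "'a::field poly poly \<Rightarrow> 'a \<Rightarrow> 'a \<Rightarrow> 'a" where
  "eval2 g a b = poly (map_poly (\<lambda>c. poly c a) g) b"

definition affine_pt :: "'a::field poly \<Rightarrow> nat \<Rightarrow> 'a \<times> 'a \<Rightarrow> bool" where
  "affine_pt f d P \<longleftrightarrow> snd P ^ d = poly f (fst P)"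

(* g \<in> m_P^k A_{m_P}, where m_P = (x - a, y - b) is the maximal ideal of the affine point
   P = (a,b): there is v with v(P) \<noteq> 0 such that g*v lies in m_P^k, the ideal of A
   generated by the (x-a)^i (y-b)^(k-i). *)
definition vanish_ge :: "'a::field poly \<Rightarrow> nat \<Rightarrow> 'a \<times> 'a \<Rightarrow> 'a poly poly \<Rightarrow> nat \<Rightarrow> bool" where
  "vanish_ge f d P g k \<longleftrightarrow>
     (\<exists>v c. eval2 v (fst P) (snd P) \<noteq> 0 \<and>
        curve_eq f d dvd
          (g * v - (\<Sum>i\<le>k. c i * [:[:- fst P, 1:]:] ^ i * [:[:- snd P:], 1:] ^ (k - i))))"

definition ord_aff :: "'a::field poly \<Rightarrow> nat \<Rightarrow> 'a \<times> 'a \<Rightarrow> 'a poly poly \<Rightarrow> nat" where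
  "ord_aff f d P g = (GREATEST k. vanish_ge f d P g k)"

(* pole order at the point at infinity O of a reduced representative g (deg_y g < d),
   g = sum a_ij x^i y^j: ord_O(x) = -d, ord_O(y) = -n (n = deg f) *)
definition pole_O :: "'a::field poly \<Rightarrow> nat \<Rightarrow> 'a poly poly \<Rightarrow> nat" where
  "pole_O f d g = Max {d * degree (coeff g j) + degree f * j | j. coeff g j \<noteq> 0}"

(* points of C_{f,d}(K): None = O, Some (a,b) = affine point *)
definition curve_point :: "'a::field poly \<Rightarrow> nat \<Rightarrow> ('a \<times> 'a) option \<Rightarrow> bool" where
  "curve_point f d Q \<longleftrightarrow> (case Q of None \<Rightarrow> True | Some P \<Rightarrow> affine_pt f d P)"

(* k((Q) - (O)) is a principal divisor: there is a rational function g/h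
   (g, h nonzero reduced elements of A) with divisor k(Q) - k(O) *)
definition principal_mult :: "'a::field poly \<Rightarrow> nat \<Rightarrow> ('a \<times> 'a) option \<Rightarrow> nat \<Rightarrow> bool" where
  "principal_mult f d Q k \<longleftrightarrow>
     (\<exists>g h. g \<noteq> 0 \<and> h \<noteq> 0 \<and> degree g < d \<and> degree h < d \<and>
        (\<forall>P. affine_pt f d P \<longrightarrow>
           int (ord_aff f d P g) - int (ord_aff f d P h) = (if Q = Some P then int k else 0)) \<and>
        (- int (pole_O f d g)) - (- int (pole_O f d h)) = (if Q = None then 0 else - int k))"

(* the point Q has order m in J(C_{f,d}) *)
definition point_order :: "'a::field poly \<Rightarrow> nat \<Rightarrow> ('a \<times> 'a) option \<Rightarrow> nat \<Rightarrow> bool" where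
  "point_order f d Q m \<longleftrightarrow> 0 < m \<and> principal_mult f d Q m \<and>
      (\<forall>k. 0 < k \<and> k < m \<longrightarrow> \<not> principal_mult f d Q k)"

definition reachable :: "'a::field itself \<Rightarrow> nat \<Rightarrow> nat \<Rightarrow> nat \<Rightarrow> bool" where
  "reachable (TYPE('a)) n d m \<longleftrightarrow> 1 < m \<and>
     (\<exists>f :: 'a poly. lead_coeff f = 1 \<and> degree f = n \<and> rsquarefree f \<and>
        (\<exists>Q. curve_point f d Q \<and> point_order f d Q m))"

end

theory Submission
  imports Defs "HOL-Computational_Algebra.Polynomial_FPS"
begin

unbundle fps_syntax


section \<open>Generic evaluation homomorphism\<close>

lemma pm_pCons:
  assumes "h 0 = 0"
  shows "poly (map_poly h (pCons c p)) Y = h c + Y * poly (map_poly h p) Y"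
  using assms by (simp add: map_poly_pCons)

lemma pm_const:
  assumes "h 0 = 0"
  shows "poly (map_poly h [:c:]) Y = h c"
  using pm_pCons[of h c 0 Y] assms by simp

lemma pm_add:
  fixes h :: "'a::comm_ring_1 \<Rightarrow> 'b::comm_ring_1"
  assumes h0: "h 0 = 0" and ha: "\<And>a b. h (a + b) = h a + h b"
  shows "poly (map_poly h (p + q)) Y = poly (map_poly h p) Y + poly (map_poly h q) Y"
proof (induction p arbitrary: q rule: pCons_induct)
  case 0 then show ?case by simp
next
  case (pCons a p)
  obtain b q' where q: "q = pCons b q'" by (cases q) auto
  have "pCons a p + q = pCons (a + b) (p + q')" by (simp add: q)
  then show ?case using pCons.IH[of q'] by (simp add: pm_pCons[of h, OF h0] q ha algebra_simps)
qed

lemma pm_neg: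
  fixes h :: "'a::comm_ring_1 \<Rightarrow> 'b::comm_ring_1"
  assumes h0: "h 0 = 0" and ha: "\<And>a b. h (a + b) = h a + h b"
  shows "poly (map_poly h (- p)) Y = - poly (map_poly h p) Y"
proof -
  have "poly (map_poly h (- p + p)) Y = poly (map_poly h (- p)) Y + poly (map_poly h p) Y"
    by (rule pm_add[of h, OF h0 ha])
  then show ?thesis by (simp add: eq_neg_iff_add_eq_0)
qed

lemma pm_diff:
  fixes h :: "'a::comm_ring_1 \<Rightarrow> 'b::comm_ring_1"
  assumes h0: "h 0 = 0" and ha: "\<And>a b. h (a + b) = h a + h b"
  shows "poly (map_poly h (p - q)) Y = poly (map_poly h p) Y - poly (map_poly h q) Y"
  using pm_add[OF h0 ha, of p "-q" Y] pm_neg[of h, OF h0 ha, of q Y] by simp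

lemma pm_smult:
  fixes h :: "'a::comm_ring_1 \<Rightarrow> 'b::comm_ring_1"
  assumes h0: "h 0 = 0" and hm: "\<And>a b. h (a * b) = h a * h b"
  shows "poly (map_poly h (smult c q)) Y = h c * poly (map_poly h q) Y"
proof (induction q rule: pCons_induct)
  case 0 then show ?case by (simp add: h0)
next
  case (pCons a p)
  then show ?case by (simp add: pm_pCons[of h, OF h0] hm algebra_simps)
qed

lemma pm_mult:
  fixes h :: "'a::comm_ring_1 \<Rightarrow> 'b::comm_ring_1"
  assumes h0: "h 0 = 0" and ha: "\<And>a b. h (a + b) = h a + h b"
    and hm: "\<And>a b. h (a * b) = h a * h b"
  shows "poly (map_poly h (p * q)) Y = poly (map_poly h p) Y * poly (map_poly h q) Y"
proof (induction p rule: pCons_induct)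
  case 0 then show ?case by simp
next
  case (pCons a p)
  have "pCons a p * q = smult a q + pCons 0 (p * q)" by simp
  then show ?case using pCons.IH
    by (simp add: pm_add[of h, OF h0 ha] pm_smult[of h, OF h0 hm] pm_pCons[of h, OF h0] h0 algebra_simps)
qed

lemma pm_one:
  fixes h :: "'a::comm_ring_1 \<Rightarrow> 'b::comm_ring_1"
  assumes h0: "h 0 = 0" and h1: "h 1 = 1"
  shows "poly (map_poly h 1) Y = 1"
  using h1 by simp

lemma pm_power:
  fixes h :: "'a::comm_ring_1 \<Rightarrow> 'b::comm_ring_1"
  assumes h0: "h 0 = 0" and ha: "\<And>a b. h (a + b) = h a + h b"
    and hm: "\<And>a b. h (a * b) = h a * h b" and h1: "h 1 = 1"
  shows "poly (map_poly h (p ^ n)) Y = poly (map_poly h p) Y ^ n"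
  by (induction n) (simp_all add: pm_mult[of h, OF h0 ha hm] h1)

lemma pm_nth0:
  fixes h :: "'a::comm_ring_1 \<Rightarrow> 'b::comm_ring_1 fps"
  assumes h0: "h 0 = 0"
  shows "poly (map_poly h p) Y $ 0 = poly (map_poly (\<lambda>c. h c $ 0) p) (Y $ 0)"
proof (induction p rule: pCons_induct)
  case 0 then show ?case by simp
next
  case (pCons a p)
  then show ?case by (simp add: pm_pCons[of h, OF h0] pm_pCons[of "\<lambda>c. h c $ 0"] h0)
qed

section \<open>Evaluation of polynomials at power series\<close>

definition evx :: "'a::field fps \<Rightarrow> 'a poly \<Rightarrow> 'a fps" where
  "evx X c = poly (map_poly fps_const c) X"

lemma evx_0[simp]: "evx X 0 = 0" by (simp add: evx_def)
lemma evx_const[simp]: "evx X [:c:] = fps_const c"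
  by (simp add: evx_def pm_const)
lemma evx_add[simp]: "evx X (p + q) = evx X p + evx X q"
  unfolding evx_def by (rule pm_add) (auto simp: fps_const_add)
lemma evx_neg[simp]: "evx X (- p) = - evx X p"
  unfolding evx_def by (rule pm_neg) (auto simp: fps_const_add)
lemma evx_diff[simp]: "evx X (p - q) = evx X p - evx X q"
  unfolding evx_def by (rule pm_diff) (auto simp: fps_const_add)
lemma evx_mult[simp]: "evx X (p * q) = evx X p * evx X q"
  unfolding evx_def by (rule pm_mult) (auto simp: fps_const_add fps_const_mult)
lemma evx_one[simp]: "evx X 1 = 1"
  unfolding evx_def by simp
lemma evx_power[simp]: "evx X (p ^ n) = evx X p ^ n"
  by (induction n) simp_all
lemma evx_pCons: "evx X (pCons c p) = fps_const c + X * evx X p"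
  unfolding evx_def by (rule pm_pCons) simp
lemma evx_smult[simp]: "evx X (smult c p) = fps_const c * evx X p"
  unfolding evx_def by (rule pm_smult) (auto simp: fps_const_mult)
lemma evx_lin[simp]: "evx X [:c, 1:] = fps_const c + X"
  by (simp add: evx_pCons)
lemma evx_nth0: "evx X p $ 0 = poly p (X $ 0)"
  unfolding evx_def by (subst pm_nth0) simp_all

lemma evx_compose:
  assumes "W $ 0 = 0"
  shows "evx V p oo W = evx (V oo W) p"
proof (induction p rule: pCons_induct)
  case 0 then show ?case by simp
next
  case (pCons a p)
  then show ?case using assms
    by (simp add: evx_pCons fps_compose_add_distrib fps_compose_mult_distrib)
qed

lemma evx_fps_X: "evx fps_X p = fps_of_poly p"
  by (induction p rule: pCons_induct) (simp_all add: evx_pCons fps_of_poly_pCons fps_const_add)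

lemma evx_shift: "evx (fps_const a + fps_X) p = fps_of_poly (pcompose p [:a, 1:])"
proof (induction p rule: pCons_induct)
  case 0 then show ?case by simp
next
  case (pCons c p)
  then show ?case
    by (simp add: evx_pCons pcompose_pCons fps_of_poly_add fps_of_poly_mult fps_of_poly_const
        fps_of_poly_pCons)
qed

definition Phi :: "'a::field fps \<Rightarrow> 'a fps \<Rightarrow> 'a poly poly \<Rightarrow> 'a fps" where
  "Phi X Y G = poly (map_poly (evx X) G) Y"

lemma Phi_0[simp]: "Phi X Y 0 = 0" by (simp add: Phi_def)
lemma Phi_add[simp]: "Phi X Y (p + q) = Phi X Y p + Phi X Y q"
  unfolding Phi_def by (rule pm_add) auto
lemma Phi_neg[simp]: "Phi X Y (- p) = - Phi X Y p"
  unfolding Phi_def by (rule pm_neg) auto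
lemma Phi_diff[simp]: "Phi X Y (p - q) = Phi X Y p - Phi X Y q"
  unfolding Phi_def by (rule pm_diff) auto
lemma Phi_mult[simp]: "Phi X Y (p * q) = Phi X Y p * Phi X Y q"
  unfolding Phi_def by (rule pm_mult) auto
lemma Phi_one[simp]: "Phi X Y 1 = 1"
  unfolding Phi_def by simp
lemma Phi_power[simp]: "Phi X Y (p ^ n) = Phi X Y p ^ n"
  by (induction n) simp_all
lemma Phi_const[simp]: "Phi X Y [:c:] = evx X c"
  unfolding Phi_def by (rule pm_const) simp
lemma Phi_pCons: "Phi X Y (pCons c p) = evx X c + Y * Phi X Y p"
  unfolding Phi_def by (rule pm_pCons) simp
lemma Phi_smult[simp]: "Phi X Y (smult c p) = evx X c * Phi X Y p"
  unfolding Phi_def by (rule pm_smult) auto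
lemma Phi_y[simp]: "Phi X Y [:0, 1:] = Y"
  by (simp add: Phi_pCons)
lemma Phi_ylin[simp]: "Phi X Y [:c, 1:] = evx X c + Y"
  by (simp add: Phi_pCons)
lemma Phi_monom1: "Phi X Y (monom 1 k) = Y ^ k"
  by (simp add: monom_altdef)

lemma Phi_nth0: "Phi X Y G $ 0 = eval2 G (X $ 0) (Y $ 0)"
  unfolding Phi_def eval2_def by (subst pm_nth0) (simp_all add: evx_nth0)

lemma Phi_curve_eq:
  assumes "Y ^ d = evx X f"
  shows "Phi X Y (curve_eq f d) = 0"
  using assms by (simp add: curve_eq_def Phi_monom1)

lemma Phi_dvd_curve:
  assumes "Y ^ d = evx X f" "curve_eq f d dvd G"
  shows "Phi X Y G = 0"
proof -
  from assms(2) obtain q where "G = curve_eq f d * q" by (elim dvdE)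
  then show ?thesis using Phi_curve_eq[OF assms(1)] by simp
qed

lemma Phi_cong:
  assumes "Y ^ d = evx X f" "curve_eq f d dvd (G - H)"
  shows "Phi X Y G = Phi X Y H"
  using Phi_dvd_curve[OF assms] by simp

lemma Xpow_dvd_iff:
  fixes F :: "'a::field fps"
  shows "fps_X ^ k dvd F \<longleftrightarrow> (\<forall>j<k. F $ j = 0)"
proof
  assume "fps_X ^ k dvd F"
  then obtain G where "F = fps_X ^ k * G" by (elim dvdE)
  then show "\<forall>j<k. F $ j = 0" by (simp add: fps_X_power_mult_nth)
next
  assume H: "\<forall>j<k. F $ j = 0"
  show "fps_X ^ k dvd F"
  proof (cases "F = 0")
    case True then show ?thesis by simp
  next
    case False
    have "k \<le> subdegree F"
      using H False by (meson not_le nth_subdegree_nonzero)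
    then have "fps_shift k F * fps_X ^ k = F" by (rule fps_shift_times_fps_X_power)
    then show ?thesis by (metis dvd_triv_right)
  qed
qed

lemma X_dvd_iff0:
  fixes F :: "'a::field fps"
  shows "fps_X dvd F \<longleftrightarrow> F $ 0 = 0"
  using Xpow_dvd_iff[of 1 F] by simp

lemma power_one_nth1:
  fixes F :: "'a::field fps"
  shows "(F ^ n) $ 1 = of_nat n * (F $ 0) ^ (n - 1) * F $ 1"
proof -
  have "(F ^ n) $ 1 = fps_deriv (F ^ n) $ 0" by simp
  also have "\<dots> = of_nat n * F $ 1 * (F $ 0) ^ (n - 1)"
    by (simp add: fps_deriv_power fps_mult_nth_0 del: fps_deriv_nth)
       (simp add: fps_deriv_nth fps_power_zeroth)
  finally show ?thesis by (simp add: algebra_simps)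
qed


lemma sqf_factor:
  fixes f :: "'a::field poly"
  assumes "rsquarefree f" "poly f a = 0"
  shows "\<exists>u. f = [:-a, 1:] * u \<and> poly u a \<noteq> 0"
proof -
  have f0: "f \<noteq> 0" using assms(1) by (simp add: rsquarefree_def)
  from assms(2) obtain u where u: "f = [:-a, 1:] * u" by (auto simp: poly_eq_0_iff_dvd elim: dvdE)
  have "poly u a \<noteq> 0"
  proof
    assume "poly u a = 0"
    then obtain v where "u = [:-a, 1:] * v" by (auto simp: poly_eq_0_iff_dvd elim: dvdE)
    then have "f = [:-a, 1:] ^ 2 * v" using u by (simp only: power2_eq_square mult.assoc)
    then have "[:-a, 1:] ^ 2 dvd f" by simp
    then have "2 \<le> order a f" using f0 by (simp add: order_divides)
    moreover have "order a f = 1" by (rule rsquarefree_root_order[OF assms f0])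
    ultimately show False by simp
  qed
  with u show ?thesis by blast
qed

lemma evx_shift_lin: "evx (fps_const a + V) [:-a, 1:] = (V::'a::field fps)"
  by (simp add: algebra_simps)

lemma fps_inv_nth0[simp]: "fps_inv E $ 0 = 0"
  by (simp add: fps_inv_def)

lemma fps_inv_nth1: "fps_inv (E :: 'a::field fps) $ Suc 0 = 1 / E $ Suc 0"
  by (simp add: fps_inv_def)

lemma compose_lin: "W $ 0 = 0 \<Longrightarrow> (fps_const b + fps_X) oo W = fps_const (b::'a::field) + W"
  by (simp add: fps_compose_add_distrib)

locale curve =
  fixes f :: "'a::alg_closed_field poly" and d :: nat
  assumes d1: "1 < d" and chd: "of_nat d \<noteq> (0::'a)" and sqf: "rsquarefree f"
    and degf: "0 < degree f"
begin

lemma d0: "0 < d" using d1 by simp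

definition Eu :: "'a \<Rightarrow> 'a fps" where
  "Eu b = (fps_const b + fps_X) ^ d - fps_const (b ^ d)"
definition Du :: "'a \<Rightarrow> 'a \<Rightarrow> 'a fps" where
  "Du a b = evx (fps_const a + fps_X) f - fps_const (b ^ d)"
definition Yu :: "'a \<Rightarrow> 'a \<Rightarrow> 'a fps" where
  "Yu a b = fps_const b + (fps_inv (Eu b) oo Du a b)"
definition Er :: "'a \<Rightarrow> 'a fps" where
  "Er a = evx (fps_const a + fps_X) f"
definition sr :: "'a \<Rightarrow> 'a fps" where
  "sr a = fps_inv (Er a) oo fps_X ^ d"

lemma sr0[simp]: "sr a $ 0 = 0" by (simp add: sr_def)

definition pX :: "'a \<Rightarrow> 'a \<Rightarrow> 'a fps" where
  "pX a b = (if b = 0 then fps_const a + sr a else fps_const a + fps_X)"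
definition pY :: "'a \<Rightarrow> 'a \<Rightarrow> 'a fps" where
  "pY a b = (if b = 0 then fps_X else Yu a b)"
definition PhiP :: "'a \<times> 'a \<Rightarrow> 'a poly poly \<Rightarrow> 'a fps" where
  "PhiP P = Phi (pX (fst P) (snd P)) (pY (fst P) (snd P))"

lemma Yu_props:
  assumes b: "b \<noteq> 0" and ab: "b ^ d = poly f a"
  shows "Yu a b ^ d = evx (fps_const a + fps_X) f" "Yu a b $ 0 = b"
proof -
  define E where "E = Eu b"
  define D where "D = Du a b"
  define W where "W = fps_inv E oo D"
  have E0: "E $ 0 = 0" by (simp add: E_def Eu_def fps_power_zeroth)
  have "E $ 1 = of_nat d * b ^ (d - 1)"
    using power_one_nth1[of "fps_const b + fps_X" d] by (simp add: E_def Eu_def)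
  then have E1: "E $ 1 \<noteq> 0" using b chd by simp
  have D0: "D $ 0 = 0" by (simp add: D_def Du_def evx_nth0 ab)
  have W0: "W $ 0 = 0" by (simp add: W_def)
  have "E oo W = (fps_const b + W) ^ d - fps_const (b ^ d)"
    unfolding E_def Eu_def
    by (simp add: fps_compose_sub_distrib fps_compose_power[OF W0, symmetric] compose_lin[OF W0])
  moreover have "E oo W = D"
    unfolding W_def by (simp add: fps_compose_assoc[OF D0] fps_inv_right[OF E0 E1] D0)
  ultimately have "(fps_const b + W) ^ d = evx (fps_const a + fps_X) f"
    by (simp add: D_def Du_def)
  then show "Yu a b ^ d = evx (fps_const a + fps_X) f"
    by (simp add: Yu_def W_def E_def D_def)
  show "Yu a b $ 0 = b" by (simp add: Yu_def)
qed

lemma Er_props: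
  assumes fa: "poly f a = 0"
  shows "Er a $ 0 = 0" "Er a $ 1 \<noteq> 0"
proof -
  show "Er a $ 0 = 0" by (simp add: Er_def evx_nth0 fa)
  obtain u where u: "f = [:-a, 1:] * u" "poly u a \<noteq> 0" using sqf_factor[OF sqf fa] by blast
  have "Er a = fps_X * evx (fps_const a + fps_X) u"
    unfolding Er_def by (subst u(1), subst evx_mult, subst evx_shift_lin) (rule refl)
  then show "Er a $ 1 \<noteq> 0" using u(2) by (simp add: evx_nth0)
qed

lemma sr_props:
  assumes fa: "poly f a = 0"
  shows "fps_X ^ d = evx (fps_const a + sr a) f" "sr a $ 0 = 0"
    "fps_X ^ d dvd sr a" "subdegree (sr a) = d" "sr a \<noteq> 0"
proof -
  define E where "E = Er a"
  have E0: "E $ 0 = 0" and E1: "E $ 1 \<noteq> 0" using Er_props[OF fa] by (simp_all add: E_def)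
  have X0: "(fps_X ^ d :: 'a fps) $ 0 = 0" using d0 by simp
  show s0: "sr a $ 0 = 0" by (simp add: sr_def)
  have "E oo sr a = fps_X ^ d"
    unfolding sr_def E_def[symmetric] by (simp add: fps_compose_assoc[OF X0] fps_inv_right[OF E0 E1] fps_X_fps_compose_startby0[OF X0])
  moreover have "E oo sr a = evx (fps_const a + sr a) f"
    unfolding E_def Er_def by (simp add: evx_compose[OF s0] compose_lin[OF s0])
  ultimately show "fps_X ^ d = evx (fps_const a + sr a) f" by simp
  have "fps_X dvd fps_inv E" by (simp add: X_dvd_iff0)
  then obtain T where T: "fps_inv E = fps_X * T" by (elim dvdE)
  have T0: "T $ 0 \<noteq> 0"
  proof -
    have "fps_inv E $ 1 = T $ 0" by (simp add: T)
    then show ?thesis using E1 by (metis fps_inv_nth1 One_nat_def divide_eq_0_iff one_neq_zero)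
  qed
  have s: "sr a = fps_X ^ d * (T oo fps_X ^ d)"
    unfolding sr_def E_def[symmetric] T
    by (simp add: fps_compose_mult_distrib[OF X0] fps_X_fps_compose_startby0[OF X0])
  then show "fps_X ^ d dvd sr a" by simp
  have U0: "(T oo fps_X ^ d) $ 0 \<noteq> 0" using T0 by simp
  then have "T oo fps_X ^ d \<noteq> 0" by (metis fps_zero_nth)
  then show "subdegree (sr a) = d" using U0 by (simp add: s fps_X_power_subdegree)
  show "sr a \<noteq> 0" using s \<open>T oo fps_X ^ d \<noteq> 0\<close> by simp
qed

lemma pXY:
  assumes "affine_pt f d P"
  shows "pY (fst P) (snd P) ^ d = evx (pX (fst P) (snd P)) f"
    "pX (fst P) (snd P) $ 0 = fst P" "pY (fst P) (snd P) $ 0 = snd P"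
proof -
  obtain a b where P: "P = (a, b)" by (cases P)
  have ab: "b ^ d = poly f a" using assms by (simp add: affine_pt_def P)
  show "pY (fst P) (snd P) ^ d = evx (pX (fst P) (snd P)) f"
  proof (cases "b = 0")
    case True
    then have "poly f a = 0" using ab d0 by (simp add: power_0_left)
    then show ?thesis using True sr_props(1) by (simp add: P pX_def pY_def)
  next
    case False
    then show ?thesis using Yu_props[OF False ab] by (simp add: P pX_def pY_def)
  qed
  show "pX (fst P) (snd P) $ 0 = fst P"
    by (simp add: P pX_def)
  show "pY (fst P) (snd P) $ 0 = snd P"
    using Yu_props(2) ab by (simp add: P pY_def)
qed

lemma PhiP_nth0:
  assumes "affine_pt f d P"
  shows "PhiP P G $ 0 = eval2 G (fst P) (snd P)"
  using pXY[OF assms] by (simp add: PhiP_def Phi_nth0)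

lemma PhiP_cong:
  assumes "affine_pt f d P" "curve_eq f d dvd (G - H)"
  shows "PhiP P G = PhiP P H"
  unfolding PhiP_def by (rule Phi_cong[OF pXY(1)[OF assms(1)] assms(2)])

lemma PhiP_curve:
  assumes "affine_pt f d P" "curve_eq f d dvd G"
  shows "PhiP P G = 0"
  unfolding PhiP_def by (rule Phi_dvd_curve[OF pXY(1)[OF assms(1)] assms(2)])

end


lemma eval2_0[simp]: "eval2 0 a b = 0"
  by (simp add: eval2_def)
lemma eval2_add[simp]: "eval2 (p + q) a b = eval2 p a b + eval2 q a b"
  unfolding eval2_def by (rule pm_add) auto
lemma eval2_diff[simp]: "eval2 (p - q) a b = eval2 p a b - eval2 q a b"
  unfolding eval2_def by (rule pm_diff) auto
lemma eval2_mult[simp]: "eval2 (p * q) a b = eval2 p a b * eval2 q a b"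
  unfolding eval2_def by (rule pm_mult) auto
lemma eval2_one[simp]: "eval2 1 a b = 1"
  unfolding eval2_def by simp
lemma eval2_power[simp]: "eval2 (p ^ n) a b = eval2 p a b ^ n"
  by (induction n) simp_all
lemma eval2_const[simp]: "eval2 [:c:] a b = poly c a"
  unfolding eval2_def by (rule pm_const) simp
lemma eval2_pCons: "eval2 (pCons c p) a b = poly c a + b * eval2 p a b"
  unfolding eval2_def by (rule pm_pCons) simp
lemma eval2_y[simp]: "eval2 [:0, 1:] a b = b"
  by (simp add: eval2_pCons)
lemma eval2_sum: "eval2 (\<Sum>i\<in>A. g i) a b = (\<Sum>i\<in>A. eval2 (g i) a b)"
  by (induction A rule: infinite_finite_induct) simp_all

lemma eval2_alt: "eval2 G a b = poly (poly G [:b:]) a"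
  by (induction G rule: pCons_induct) (simp_all add: eval2_pCons)

lemma decomp2:
  fixes G :: "'a::field poly poly"
  shows "\<exists>S S'. G = [:[:-b:], 1:] * S + [:[:-a, 1:]:] * [:S':] + [:[:eval2 G a b:]:]"
proof -
  have 1: "[:-[:b:], 1:] * synthetic_div G [:b:] + [:poly G [:b:]:] = G"
    by (rule synthetic_div_correct')
  have 2: "[:-a, 1:] * synthetic_div (poly G [:b:]) a + [:poly (poly G [:b:]) a:] = poly G [:b:]"
    by (rule synthetic_div_correct')
  define S where "S = synthetic_div G [:b:]"
  define S' where "S' = synthetic_div (poly G [:b:]) a"
  have 3: "poly G [:b:] = [:-a, 1:] * S' + [:eval2 G a b:]"
    using 2 by (simp add: S'_def eval2_alt)
  have 4: "[:poly G [:b:]:] = [:[:-a, 1:]:] * [:S':] + [:[:eval2 G a b:]:]"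
    unfolding 3 by simp
  have 5: "G = [:[:-b:], 1:] * S + [:poly G [:b:]:]"
    using 1 by (simp add: S_def)
  show ?thesis using 5 4 by (metis add.assoc)
qed

lemma const_poly_power: "[:c:] ^ n = [:(c::'b::comm_semiring_1) ^ n:]"
  by (induction n) (simp_all add: mult.commute)

lemma ring_identity1:
  fixes G :: "'b::comm_ring_1"
  assumes "G = Yb * S + XA * T" "Yb * V = C + XA * R"
  shows "G * V - XA * (R * S + T * V) = C * S"
proof -
  have "G * V = (Yb * V) * S + XA * T * V" using assms(1) by (simp add: algebra_simps)
  then show ?thesis using assms(2) by (simp add: algebra_simps)
qed

context curve
begin

definition param :: "'a \<times> 'a \<Rightarrow> 'a poly poly" where
  "param P = (if snd P = 0 then [:0, 1:] else [:[:- fst P, 1:]:])"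

lemma PhiP_param:
  assumes "affine_pt f d P"
  shows "PhiP P (param P) = fps_X"
  by (cases "snd P = 0") (simp_all add: PhiP_def param_def pX_def pY_def evx_shift_lin)

lemma curve_eq_monom: "monom 1 d = curve_eq f d + [:f:]"
  by (simp add: curve_eq_def)

lemma div_param:
  assumes P: "affine_pt f d P" and G0: "eval2 G (fst P) (snd P) = 0"
  shows "\<exists>v G'. eval2 v (fst P) (snd P) \<noteq> 0 \<and> curve_eq f d dvd (G * v - param P * G')"
proof -
  obtain a b where Pab: "P = (a, b)" by (cases P)
  have ab: "b ^ d = poly f a" using P by (simp add: affine_pt_def Pab)
  obtain S S' where G: "G = [:[:-b:], 1:] * S + [:[:-a, 1:]:] * [:S':]"
    using decomp2[of G b a] G0 by (auto simp: Pab)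
  show ?thesis
  proof (cases "b = 0")
    case True
    then have fa: "poly f a = 0" using ab d0 by (simp add: power_0_left)
    obtain u where u: "f = [:-a, 1:] * u" "poly u a \<noteq> 0" using sqf_factor[OF sqf fa] by blast
    define G' where "G' = S * [:u:] + [:0, 1:] ^ (d - 1) * [:S':]"
    have y: "[:0, 1:] * [:0, 1:] ^ (d - 1) = (monom 1 d :: 'a poly poly)"
      using d0 by (simp add: monom_altdef power_Suc[symmetric] del: power_Suc)
    have "G * [:u:] - [:0, 1:] * G' = [:f:] * [:S':] - monom 1 d * [:S':]"
      unfolding G G'_def True y[symmetric] u(1) by (simp add: algebra_simps)
    also have "\<dots> = - (curve_eq f d * [:S':])"
      by (simp add: curve_eq_def algebra_simps)
    finally have dv: "curve_eq f d dvd (G * [:u:] - [:0, 1:] * G')" by (metis dvd_minus_iff dvd_triv_left)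
    have pp: "param P = [:0, 1:]" using True by (simp add: param_def Pab)
    have c1: "curve_eq f d dvd (G * [:u:] - param P * G')" using dv by (simp only: pp)
    have c2: "eval2 [:u:] (fst P) (snd P) \<noteq> 0" using u(2) by (simp add: Pab)
    show ?thesis by (rule exI[of _ "[:u:]"], rule exI[of _ G'], rule conjI, rule c2, rule c1)
  next
    case False
    define V where "V = (\<Sum>i<d. [:[:b:]:] ^ (d - Suc i) * [:0, 1:] ^ i)"
    have pd: "[:0, 1:] ^ d - [:[:b:]:] ^ d = ([:0, 1:] - [:[:b:]:]) * V"
      unfolding V_def by (rule power_diff_sumr2)
    have e1: "[:[:-b:], 1:] = [:0, 1:] - [:[:b:]:]" by simp
    have e2: "[:0, 1:] ^ d = (monom 1 d :: 'a poly poly)" by (simp add: monom_altdef)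
    have e3: "[:[:b:]:] ^ d = [:[:b ^ d:]:]" by (simp add: const_poly_power)
    have YV: "[:[:-b:], 1:] * V = monom 1 d - [:[:b ^ d:]:]"
      using pd unfolding e1 e2 e3 by simp
    define r where "r = synthetic_div f a"
    have r: "f = [:-a, 1:] * r + [:poly f a:]"
      using synthetic_div_correct'[of a f] by (simp add: r_def)
    have r2: "f - [:poly f a:] = [:-a, 1:] * r"
      using r by (metis add_diff_cancel_right')
    have YV2: "[:[:-b:], 1:] * V = curve_eq f d + [:[:-a, 1:]:] * [:r:]"
    proof -
      have "monom 1 d - [:[:b ^ d:]:] = curve_eq f d + [:f - [:poly f a:]:]"
        by (simp add: curve_eq_def ab)
      also have "[:f - [:poly f a:]:] = [:[:-a, 1:]:] * [:r:]"
        unfolding r2 by simp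
      finally show ?thesis using YV by simp
    qed
    define G' where "G' = [:r:] * S + [:S':] * V"
    have "G * V - [:[:-a, 1:]:] * G' = curve_eq f d * S"
      unfolding G'_def by (rule ring_identity1[OF G YV2])
    then have c1: "curve_eq f d dvd (G * V - param P * G')"
      using False by (simp add: param_def Pab)
    have "eval2 V a b = (\<Sum>i<d. b ^ (d - Suc i) * b ^ i)"
      by (simp add: V_def eval2_sum)
    also have "\<dots> = (\<Sum>i<d. b ^ (d - 1))"
    proof (intro sum.cong refl)
      fix i assume "i \<in> {..<d}"
      then have "d - Suc i + i = d - 1" by simp
      then show "b ^ (d - Suc i) * b ^ i = b ^ (d - 1)" by (metis power_add)
    qed
    finally have "eval2 V a b = of_nat d * b ^ (d - 1)" by simp
    then have c2: "eval2 V (fst P) (snd P) \<noteq> 0" using False chd by (simp add: Pab)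
    show ?thesis by (rule exI[of _ V], rule exI[of _ G'], rule conjI, rule c2, rule c1)
  qed
qed

end


lemma Phi_sum: "Phi X Y (\<Sum>i\<in>A. g i) = (\<Sum>i\<in>A. Phi X Y (g i))"
  by (induction A rule: infinite_finite_induct) simp_all

lemma Xpow_dvd_subdeg:
  fixes F :: "'a::field fps"
  assumes "F \<noteq> 0"
  shows "fps_X ^ k dvd F \<longleftrightarrow> k \<le> subdegree F"
proof -
  have "(\<forall>j<k. F $ j = 0) \<longleftrightarrow> k \<le> subdegree F"
  proof
    assume H: "\<forall>j<k. F $ j = 0"
    show "k \<le> subdegree F"
    proof (rule ccontr)
      assume "\<not> k \<le> subdegree F"
      then have "F $ subdegree F = 0" using H by simp
      then show False using assms by simp
    qed
  next
    assume "k \<le> subdegree F"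
    then show "\<forall>j<k. F $ j = 0" by (intro allI impI nth_less_subdegree_zero) linarith
  qed
  then show ?thesis by (simp add: Xpow_dvd_iff)
qed

context curve
begin

lemma PhiP_sum: "PhiP P (\<Sum>i\<in>A. g i) = (\<Sum>i\<in>A. PhiP P (g i))"
  by (simp add: PhiP_def Phi_sum)

lemma PhiP_mult[simp]: "PhiP P (G * H) = PhiP P G * PhiP P H"
  by (simp add: PhiP_def)
lemma PhiP_add[simp]: "PhiP P (G + H) = PhiP P G + PhiP P H"
  by (simp add: PhiP_def)
lemma PhiP_diff[simp]: "PhiP P (G - H) = PhiP P G - PhiP P H"
  by (simp add: PhiP_def)
lemma PhiP_power[simp]: "PhiP P (G ^ k) = PhiP P G ^ k"
  by (simp add: PhiP_def)
lemma PhiP_one[simp]: "PhiP P 1 = 1"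
  by (simp add: PhiP_def)
lemma PhiP_0[simp]: "PhiP P 0 = 0"
  by (simp add: PhiP_def)

lemma vanish_imp_dvd:
  assumes P: "affine_pt f d P" and V: "vanish_ge f d P G k"
  shows "fps_X ^ k dvd PhiP P G"
proof -
  obtain v c where v: "eval2 v (fst P) (snd P) \<noteq> 0"
    and dv: "curve_eq f d dvd (G * v - (\<Sum>i\<le>k. c i * [:[:- fst P, 1:]:] ^ i * [:[:- snd P:], 1:] ^ (k - i)))"
    using V unfolding vanish_ge_def by blast
  define A where "A = PhiP P [:[:- fst P, 1:]:]"
  define B where "B = PhiP P [:[:- snd P:], 1:]"
  have A0: "fps_X dvd A" unfolding X_dvd_iff0 A_def PhiP_nth0[OF P] by simp
  have B0: "fps_X dvd B" unfolding X_dvd_iff0 B_def PhiP_nth0[OF P] by (simp add: eval2_pCons)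
  have "PhiP P (G * v) = PhiP P (\<Sum>i\<le>k. c i * [:[:- fst P, 1:]:] ^ i * [:[:- snd P:], 1:] ^ (k - i))"
    by (rule PhiP_cong[OF P dv])
  also have "\<dots> = (\<Sum>i\<le>k. PhiP P (c i) * A ^ i * B ^ (k - i))"
    by (simp add: PhiP_sum A_def B_def)
  finally have eq: "PhiP P G * PhiP P v = (\<Sum>i\<le>k. PhiP P (c i) * A ^ i * B ^ (k - i))" by simp
  have "fps_X ^ k dvd (\<Sum>i\<le>k. PhiP P (c i) * A ^ i * B ^ (k - i))"
  proof (rule dvd_sum)
    fix i assume "i \<in> {..k}"
    then have ki: "fps_X ^ k = fps_X ^ i * fps_X ^ (k - i)" by (simp flip: power_add)
    have "fps_X ^ i * fps_X ^ (k - i) dvd A ^ i * B ^ (k - i)"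
      by (intro mult_dvd_mono dvd_power_same A0 B0)
    then show "fps_X ^ k dvd PhiP P (c i) * A ^ i * B ^ (k - i)"
      unfolding ki by (simp add: mult.assoc dvd_mult)
  qed
  then have "fps_X ^ k dvd PhiP P G * PhiP P v" by (simp only: eq)
  moreover have "is_unit (PhiP P v)" using v by (simp add: PhiP_nth0[OF P])
  ultimately show ?thesis by (simp add: dvd_mult_unit_iff)
qed

lemma dvd_imp_param:
  assumes P: "affine_pt f d P"
  shows "fps_X ^ k dvd PhiP P G \<Longrightarrow>
     \<exists>v c. eval2 v (fst P) (snd P) \<noteq> 0 \<and> curve_eq f d dvd (G * v - c * param P ^ k)"
proof (induction k arbitrary: G)
  case 0
  have "curve_eq f d dvd (G * 1 - G * param P ^ 0)" by simp
  moreover have "eval2 1 (fst P) (snd P) \<noteq> 0" by simp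
  ultimately show ?case by blast
next
  case (Suc k)
  have "PhiP P G $ 0 = 0" using Xpow_dvd_iff[THEN iffD1, OF Suc.prems] by simp
  then have "eval2 G (fst P) (snd P) = 0" by (simp add: PhiP_nth0[OF P])
  then obtain v G' where v: "eval2 v (fst P) (snd P) \<noteq> 0"
    and dv: "curve_eq f d dvd (G * v - param P * G')" using div_param[OF P] by blast
  have "PhiP P (G * v) = PhiP P (param P * G')" by (rule PhiP_cong[OF P dv])
  then have eq: "PhiP P G * PhiP P v = fps_X * PhiP P G'" by (simp add: PhiP_param[OF P])
  have "fps_X ^ Suc k dvd PhiP P G * PhiP P v" using Suc.prems by simp
  then have "fps_X * fps_X ^ k dvd fps_X * PhiP P G'" by (simp only: eq power_Suc)
  then have "fps_X ^ k dvd PhiP P G'" by simp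
  from Suc.IH[OF this] obtain v' c where v': "eval2 v' (fst P) (snd P) \<noteq> 0"
    and dv': "curve_eq f d dvd (G' * v' - c * param P ^ k)" by blast
  have "G * (v * v') - c * param P ^ Suc k = (G * v - param P * G') * v' + param P * (G' * v' - c * param P ^ k)"
    by (simp add: algebra_simps)
  then have "curve_eq f d dvd (G * (v * v') - c * param P ^ Suc k)"
    by (simp only:) (rule dvd_add[OF dvd_mult2[OF dv] dvd_mult[OF dv']])
  moreover have "eval2 (v * v') (fst P) (snd P) \<noteq> 0" using v v' by simp
  ultimately show ?case by blast
qed

lemma dvd_imp_vanish:
  assumes P: "affine_pt f d P" and D: "fps_X ^ k dvd PhiP P G"
  shows "vanish_ge f d P G k"
proof -
  obtain v c where v: "eval2 v (fst P) (snd P) \<noteq> 0"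
    and dv: "curve_eq f d dvd (G * v - c * param P ^ k)" using dvd_imp_param[OF P D] by blast
  show ?thesis
  proof (cases "snd P = 0")
    case True
    define cc where "cc = (\<lambda>i::nat. if i = 0 then c else 0)"
    have "(\<Sum>i\<le>k. cc i * [:[:- fst P, 1:]:] ^ i * [:[:- snd P:], 1:] ^ (k - i))
        = (\<Sum>i\<le>k. if i = 0 then c * [:0, 1:] ^ k else 0)"
      by (intro sum.cong refl) (simp add: cc_def True)
    also have "\<dots> = c * param P ^ k" using True by (simp add: param_def)
    finally have c1: "curve_eq f d dvd (G * v - (\<Sum>i\<le>k. cc i * [:[:- fst P, 1:]:] ^ i * [:[:- snd P:], 1:] ^ (k - i)))"
      using dv by (simp only:)
    show ?thesis unfolding vanish_ge_def by (rule exI[where x=v], rule exI[where x=cc], rule conjI[OF v c1])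
  next
    case False
    define cc where "cc = (\<lambda>i::nat. if i = k then c else 0)"
    have "(\<Sum>i\<le>k. cc i * [:[:- fst P, 1:]:] ^ i * [:[:- snd P:], 1:] ^ (k - i))
        = (\<Sum>i\<le>k. if i = k then c * [:[:- fst P, 1:]:] ^ k else 0)"
      by (intro sum.cong refl) (simp add: cc_def)
    also have "\<dots> = c * param P ^ k" using False by (simp add: param_def)
    finally have c1: "curve_eq f d dvd (G * v - (\<Sum>i\<le>k. cc i * [:[:- fst P, 1:]:] ^ i * [:[:- snd P:], 1:] ^ (k - i)))"
      using dv by (simp only:)
    show ?thesis unfolding vanish_ge_def by (rule exI[where x=v], rule exI[where x=cc], rule conjI[OF v c1])
  qed
qed

lemma vanish_iff:
  assumes P: "affine_pt f d P"
  shows "vanish_ge f d P G k \<longleftrightarrow> fps_X ^ k dvd PhiP P G"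
  using vanish_imp_dvd[OF P] dvd_imp_vanish[OF P] by blast

lemma ord_aff_eq:
  assumes P: "affine_pt f d P" and nz: "PhiP P G \<noteq> 0"
  shows "ord_aff f d P G = subdegree (PhiP P G)"
  unfolding ord_aff_def
proof (rule Greatest_equality)
  show "vanish_ge f d P G (subdegree (PhiP P G))"
    using nz by (simp add: vanish_iff[OF P] Xpow_dvd_subdeg)
  show "y \<le> subdegree (PhiP P G)" if "vanish_ge f d P G y" for y
    using that nz by (simp add: vanish_iff[OF P] Xpow_dvd_subdeg)
qed

end


lemma decomp_x:
  fixes G :: "'a::field poly poly"
  shows "G = smult [:-a, 1:] (map_poly (\<lambda>c. synthetic_div c a) G) + map_poly (\<lambda>c. [:poly c a:]) G"
proof (rule poly_eqI)
  fix n
  have e1: "coeff (map_poly (\<lambda>c. synthetic_div c a) G) n = synthetic_div (coeff G n) a"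
    by (simp add: coeff_map_poly)
  have e2: "coeff (map_poly (\<lambda>c. [:poly c a:]) G) n = [:poly (coeff G n) a:]"
    by (simp add: coeff_map_poly)
  show "coeff G n = coeff (smult [:-a, 1:] (map_poly (\<lambda>c. synthetic_div c a) G) + map_poly (\<lambda>c. [:poly c a:]) G) n"
    by (simp only: coeff_add coeff_smult e1 e2 synthetic_div_correct')
qed

lemma Gbar_zero:
  fixes G :: "'a::field poly poly"
  assumes "map_poly (\<lambda>c. poly c a) G = 0"
  shows "G = smult [:-a, 1:] (map_poly (\<lambda>c. synthetic_div c a) G)"
proof -
  have "map_poly (\<lambda>c. [:poly c a:]) G = 0"
  proof (rule poly_eqI)
    fix n
    have "poly (coeff G n) a = coeff (map_poly (\<lambda>c. poly c a) G) n" by (simp add: coeff_map_poly)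
    then show "coeff (map_poly (\<lambda>c. [:poly c a:]) G) n = coeff 0 n"
      using assms by (simp add: coeff_map_poly)
  qed
  then show ?thesis using decomp_x[of G a] by simp
qed

lemma fps_of_poly_small:
  fixes p :: "'a::field poly"
  assumes "degree p < k" "fps_X ^ k dvd fps_of_poly p"
  shows "p = 0"
proof (rule poly_eqI)
  fix n
  show "coeff p n = coeff 0 n"
  proof (cases "n < k")
    case True
    then show ?thesis using assms(2) by (simp add: Xpow_dvd_iff)
  next
    case False
    then show ?thesis using assms(1) by (simp add: coeff_eq_0)
  qed
qed

lemma ring_identity2:
  fixes S :: "'b::comm_ring_1"
  assumes "S = G * q + r"
  shows "(- H * q) * G - N = (H * r - N) - H * S"
  using assms by (simp add: algebra_simps)

context curve
begin

lemma curve_eq_coeff: "coeff (curve_eq f d) d = 1"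
proof -
  obtain k where k: "d = Suc k" using d0 by (cases d) auto
  show ?thesis by (simp add: curve_eq_def k)
qed

lemma curve_eq_degree: "degree (curve_eq f d) = d"
proof (rule antisym)
  show "degree (curve_eq f d) \<le> d"
    unfolding curve_eq_def using d0 by (intro degree_diff_le) (simp_all add: degree_monom_le)
  show "d \<le> degree (curve_eq f d)" using curve_eq_coeff by (intro le_degree) simp
qed

lemma curve_eq_nz: "curve_eq f d \<noteq> 0"
  using curve_eq_coeff by auto

lemma reduced_dvd_zero:
  assumes "degree G < d" "curve_eq f d dvd G"
  shows "G = 0"
proof (rule ccontr)
  assume G: "G \<noteq> 0"
  from assms(2) obtain q where q: "G = curve_eq f d * q" by (elim dvdE)
  with G have "q \<noteq> 0" by auto
  then have "degree G = d + degree q" using q curve_eq_nz by (simp add: degree_mult_eq curve_eq_degree)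
  then show False using assms(1) by simp
qed

definition red :: "'a poly poly \<Rightarrow> 'a poly poly" where
  "red G = snd (pseudo_divmod G (curve_eq f d))"

lemma red_props: "curve_eq f d dvd (G - red G)" "degree (red G) < d"
proof -
  obtain q r where qr: "pseudo_divmod G (curve_eq f d) = (q, r)" by (cases "pseudo_divmod G (curve_eq f d)")
  have lc: "coeff (curve_eq f d) (degree (curve_eq f d)) = 1" by (simp add: curve_eq_degree curve_eq_coeff)
  have 1: "smult (coeff (curve_eq f d) (degree (curve_eq f d)) ^ (Suc (degree G) - degree (curve_eq f d))) G
      = curve_eq f d * q + r" by (rule pseudo_divmod(1)[OF curve_eq_nz qr])
  have 2: "r = 0 \<or> degree r < degree (curve_eq f d)" by (rule pseudo_divmod(2)[OF curve_eq_nz qr])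
  have "G - r = curve_eq f d * q" using 1 unfolding lc by simp
  then show "curve_eq f d dvd (G - red G)" by (simp add: red_def qr)
  show "degree (red G) < d" using 2 d0 by (auto simp: red_def qr curve_eq_degree)
qed

lemma affine_ram: "poly f a = 0 \<Longrightarrow> affine_pt f d (a, 0)"
  using d0 by (simp add: affine_pt_def power_0_left)

lemma PhiP_ram_x:
  "PhiP (a, 0) [:[:-a, 1:]:] = sr a"
  by (simp add: PhiP_def pX_def pY_def evx_shift_lin)

lemma PhiP_unram_x:
  "b \<noteq> 0 \<Longrightarrow> PhiP (a, b) [:[:-a, 1:]:] = fps_X"
  by (simp add: PhiP_def pX_def pY_def evx_shift_lin)

lemma PhiP_ram_decomp:
  "PhiP (a, 0) G = sr a * PhiP (a, 0) (map_poly (\<lambda>c. synthetic_div c a) G)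
     + fps_of_poly (map_poly (\<lambda>c. poly c a) G)"
proof -
  have "PhiP (a, 0) G = PhiP (a, 0) (smult [:-a, 1:] (map_poly (\<lambda>c. synthetic_div c a) G))
     + PhiP (a, 0) (map_poly (\<lambda>c. [:poly c a:]) G)"
    by (subst decomp_x[of G a]) simp
  also have "PhiP (a, 0) (smult [:-a, 1:] (map_poly (\<lambda>c. synthetic_div c a) G))
     = sr a * PhiP (a, 0) (map_poly (\<lambda>c. synthetic_div c a) G)"
    by (simp add: PhiP_def pX_def evx_shift_lin)
  also have "PhiP (a, 0) (map_poly (\<lambda>c. [:poly c a:]) G) = fps_of_poly (map_poly (\<lambda>c. poly c a) G)"
  proof -
    have "PhiP (a, 0) (map_poly (\<lambda>c. [:poly c a:]) G)
        = poly (map_poly (evx (pX a 0)) (map_poly (\<lambda>c. [:poly c a:]) G)) fps_X"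
      by (simp add: PhiP_def Phi_def pY_def)
    also have "map_poly (evx (pX a 0)) (map_poly (\<lambda>c. [:poly c a:]) G)
        = map_poly fps_const (map_poly (\<lambda>c. poly c a) G)"
      by (simp add: map_poly_map_poly o_def)
    also have "poly \<dots> fps_X = fps_of_poly (map_poly (\<lambda>c. poly c a) G)"
      using evx_fps_X[of "map_poly (\<lambda>c. poly c a) G"] by (simp add: evx_def)
    finally show ?thesis .
  qed
  finally show ?thesis .
qed

lemma ram_divides:
  assumes fa: "poly f a = 0" and deg: "degree G < d" and D: "fps_X ^ d dvd PhiP (a, 0) G"
  shows "map_poly (\<lambda>c. poly c a) G = 0"
proof -
  have "fps_X ^ d dvd sr a * PhiP (a, 0) (map_poly (\<lambda>c. synthetic_div c a) G)"
    using sr_props(3)[OF fa] by (rule dvd_mult2)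
  then have "fps_X ^ d dvd fps_of_poly (map_poly (\<lambda>c. poly c a) G)"
    using D unfolding PhiP_ram_decomp[of a G] by (metis dvd_add_right_iff)
  moreover have "degree (map_poly (\<lambda>c. poly c a) G) < d"
    using deg map_poly_degree_leq[of "\<lambda>c. poly c a" G] by linarith
  ultimately show ?thesis using fps_of_poly_small by blast
qed

lemma ram_inj_aux:
  assumes fa: "poly f a = 0"
  shows "G \<noteq> 0 \<Longrightarrow> degree G < d \<Longrightarrow> PhiP (a, 0) G \<noteq> 0"
proof (induction "degree (lead_coeff G)" arbitrary: G rule: less_induct)
  case less
  show ?case
  proof
    assume Z: "PhiP (a, 0) G = 0"
    define Q where "Q = map_poly (\<lambda>c. synthetic_div c a) G"
    have "map_poly (\<lambda>c. poly c a) G = 0"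
      using ram_divides[OF fa less.prems(2)] Z by simp
    then have GQ: "G = smult [:-a, 1:] Q" unfolding Q_def by (rule Gbar_zero)
    have Qnz: "Q \<noteq> 0" using GQ less.prems(1) by auto
    have degQ: "degree Q < d" using GQ less.prems(2) by simp
    have "PhiP (a, 0) G = sr a * PhiP (a, 0) Q"
      unfolding GQ by (simp add: PhiP_def pX_def evx_shift_lin)
    then have "PhiP (a, 0) Q = 0" using Z sr_props(5)[OF fa] by simp
    moreover have "degree (lead_coeff Q) < degree (lead_coeff G)"
    proof -
      have L: "lead_coeff G = [:-a, 1:] * lead_coeff Q" by (simp only: GQ lead_coeff_smult)
      have "lead_coeff Q \<noteq> 0" using Qnz by simp
      then have "degree ([:-a, 1:] * lead_coeff Q) = degree [:-a, 1:] + degree (lead_coeff Q)"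
        by (intro degree_mult_eq) simp_all
      then show ?thesis by (simp only: L) simp
    qed
    ultimately show False using less.hyps Qnz degQ by blast
  qed
qed

lemma ram_inj:
  assumes "poly f a = 0" "G \<noteq> 0" "degree G < d"
  shows "PhiP (a, 0) G \<noteq> 0"
  using ram_inj_aux[OF assms(1)] assms(2,3) by blast

lemma root_exists: "\<exists>a. poly f a = 0"
  using alg_closed_imp_poly_has_root degf by blast

lemma bezout_aux:
  fixes a0 assumes a0: "poly f a0 = 0"
  shows "G \<noteq> 0 \<Longrightarrow> degree G < d \<Longrightarrow> \<exists>H N. N \<noteq> 0 \<and> curve_eq f d dvd (H * G - [:N:])"
proof (induction "degree G" arbitrary: G rule: less_induct)
  case less
  show ?case
  proof (cases "degree G = 0")
    case True
    then obtain N where GN: "G = [:N:]" by (metis degree_eq_zeroE)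
    then have "N \<noteq> 0" using less.prems by simp
    moreover have "curve_eq f d dvd (1 * G - [:N:])" by (simp add: GN)
    ultimately show ?thesis by blast
  next
    case False
    obtain q r where qr: "pseudo_divmod (curve_eq f d) G = (q, r)"
      by (cases "pseudo_divmod (curve_eq f d) G")
    define c where "c = lead_coeff G ^ (Suc (degree (curve_eq f d)) - degree G)"
    have c0: "c \<noteq> 0" using less.prems by (simp add: c_def)
    have 1: "smult c (curve_eq f d) = G * q + r"
      unfolding c_def by (rule pseudo_divmod(1)[OF less.prems(1) qr])
    have 2: "r = 0 \<or> degree r < degree G" by (rule pseudo_divmod(2)[OF less.prems(1) qr])
    show ?thesis
    proof (cases "r = 0")
      case True
      then have Gq: "G * q = smult c (curve_eq f d)" using 1 by simp
      then have qnz: "q \<noteq> 0" using c0 curve_eq_nz by auto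
      have "degree G + degree q = d"
        using Gq c0 qnz less.prems(1) by (metis degree_mult_eq degree_smult_eq curve_eq_degree)
      then have dq: "degree q < d" using False by linarith
      have "PhiP (a0, 0) (G * q) = 0"
        unfolding Gq by (rule PhiP_curve[OF affine_ram[OF a0]]) (rule dvd_smult, rule dvd_refl)
      then have "PhiP (a0, 0) G * PhiP (a0, 0) q = 0" by (simp only: PhiP_mult)
      moreover have "PhiP (a0, 0) G \<noteq> 0" using ram_inj[OF a0 less.prems] .
      moreover have "PhiP (a0, 0) q \<noteq> 0" using ram_inj[OF a0 qnz dq] .
      ultimately show ?thesis by simp
    next
      case False
      then have dr: "degree r < degree G" using 2 by simp
      then have "degree r < d" using less.prems(2) by linarith
      from less.hyps[OF dr False this] obtain H' N where N: "N \<noteq> 0"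
        and dv: "curve_eq f d dvd (H' * r - [:N:])" by blast
      have "(- H' * q) * G - [:N:] = (H' * r - [:N:]) - H' * smult c (curve_eq f d)"
        using ring_identity2[OF 1] .
      moreover have "curve_eq f d dvd H' * smult c (curve_eq f d)"
        by (rule dvd_mult, rule dvd_smult, rule dvd_refl)
      ultimately have "curve_eq f d dvd ((- H' * q) * G - [:N:])"
        using dv by (metis dvd_diff)
      then show ?thesis using N by blast
    qed
  qed
qed

lemma bezout:
  assumes "G \<noteq> 0" "degree G < d"
  shows "\<exists>H N. N \<noteq> 0 \<and> curve_eq f d dvd (H * G - [:N:])"
  using root_exists bezout_aux assms by blast

lemma PhiP_xpoly:
  "PhiP (a, b) [:N:] = (if b = 0 then evx (fps_const a + sr a) N else fps_of_poly (pcompose N [:a, 1:]))"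
  by (simp add: PhiP_def pX_def evx_shift)

lemma inj:
  assumes P: "affine_pt f d P" and G: "G \<noteq> 0" "degree G < d"
  shows "PhiP P G \<noteq> 0"
proof -
  obtain a b where Pab: "P = (a, b)" by (cases P)
  have ab: "b ^ d = poly f a" using P by (simp add: affine_pt_def Pab)
  show ?thesis
  proof (cases "b = 0")
    case True
    then have "poly f a = 0" using ab d0 by (simp add: power_0_left)
    then show ?thesis using ram_inj G by (simp add: Pab True)
  next
    case False
    obtain H N where N: "N \<noteq> 0" and dv: "curve_eq f d dvd (H * G - [:N:])" using bezout[OF G] by blast
    have "PhiP P (H * G) = PhiP P [:N:]" by (rule PhiP_cong[OF P dv])
    moreover have "PhiP P [:N:] \<noteq> 0"
    proof -
      have "pcompose N [:a, 1:] \<noteq> 0" using N by (simp add: pcompose_eq_0_iff)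
      then show ?thesis using False by (simp add: Pab PhiP_xpoly fps_of_poly_eq_iff)
    qed
    ultimately show ?thesis by auto
  qed
qed

lemma domain_x:
  assumes N: "N \<noteq> 0" and dv: "curve_eq f d dvd ([:N:] * G)"
  shows "curve_eq f d dvd G"
proof -
  obtain a0 where a0: "poly f a0 = 0" using root_exists by blast
  note P0 = affine_ram[OF a0]
  have nz: "PhiP (a0, 0) [:N:] \<noteq> 0" using inj[OF P0] N d0 by simp
  have z: "PhiP (a0, 0) [:N:] * PhiP (a0, 0) G = 0"
    using PhiP_curve[OF P0 dv] by (simp only: PhiP_mult)
  have "PhiP (a0, 0) G = 0" using nz z by (metis mult_eq_0_iff)
  moreover have "PhiP (a0, 0) G = PhiP (a0, 0) (red G)" by (rule PhiP_cong[OF P0 red_props(1)])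
  ultimately have "red G = 0" using inj[OF P0 _ red_props(2)] by auto
  then show ?thesis using red_props(1)[of G] by simp
qed

end


lemma pderiv_sq_root:
  fixes l :: "'a::field poly"
  assumes "poly l x = 0"
  shows "poly (pderiv (l * (l * R))) x = 0"
  using assms by (simp add: pderiv_mult)

lemma roots_poly_props:
  fixes c :: "'a::alg_closed_field"
  assumes c: "c \<noteq> 0" and dn: "of_nat d \<noteq> (0::'a)" and d0: "0 < d"
  shows "card {z. z ^ d = c} = d" "(\<Prod>z\<in>{z. z ^ d = c}. [:-z, 1:]) = monom 1 d - [:c:]"
proof -
  define P where "P = monom 1 d - [:c:]"
  obtain k where k: "d = Suc k" using d0 by (cases d) auto
  have cP: "coeff P d = 1" unfolding P_def k by (simp only: coeff_diff coeff_monom coeff_pCons_Suc) simp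
  have degP: "degree P = d"
  proof (rule antisym)
    show "degree P \<le> d" unfolding P_def using d0 by (intro degree_diff_le) (simp_all add: degree_monom_le)
    show "d \<le> degree P" using cP by (intro le_degree) simp
  qed
  have P0: "P \<noteq> 0" using cP by auto
  have lcP: "lead_coeff P = 1" using cP degP by simp
  have polyP: "poly P z = 0 \<longleftrightarrow> z ^ d = c" for z by (simp add: P_def poly_monom)
  obtain A where A: "size A = degree P" "P = smult (lead_coeff P) (\<Prod>x\<in>#A. [:-x, 1:])"
    using alg_closed_imp_factorization[OF P0] by blast
  have PA: "P = (\<Prod>x\<in>#A. [:-x, 1:])" using A(2) lcP by simp
  have polyA: "poly P z = 0 \<longleftrightarrow> z \<in># A" for z
  proof -
    have "poly P z = (\<Prod>x\<in>#A. poly [:-x, 1:] z)" unfolding PA by (rule poly_prod_mset)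
    also have "\<dots> = (\<Prod>x\<in>#A. z - x)" by simp
    finally have "poly P z = 0 \<longleftrightarrow> 0 \<in># image_mset (\<lambda>x. z - x) A" by (simp add: prod_mset_zero_iff)
    also have "\<dots> \<longleftrightarrow> z \<in># A" by auto
    finally show ?thesis .
  qed
  have setA: "set_mset A = {z. z ^ d = c}" using polyA polyP by auto
  have cnt: "count A x = 1" if x: "x \<in># A" for x
  proof (rule ccontr)
    assume "count A x \<noteq> 1"
    moreover have "count A x > 0" using x by simp
    ultimately have c2: "count A x \<ge> 2" by linarith
    obtain A1 where A1: "A = add_mset x A1" using multi_member_split[OF x] by blast
    have "count A1 x \<ge> 1" using c2 A1 by simp
    then have xA1: "x \<in># A1" by (simp add: Suc_le_eq)
    obtain B where B1: "A1 = add_mset x B" using multi_member_split[OF xA1] by blast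
    have B: "A = add_mset x (add_mset x B)" using A1 B1 by simp
    define R where "R = (\<Prod>x\<in>#B. [:-x, 1:])"
    have PR: "P = [:-x, 1:] * ([:-x, 1:] * R)"
      unfolding PA B R_def by (simp only: image_mset_add_mset prod_mset.add_mset)
    have "poly (pderiv P) x = 0"
      unfolding PR by (rule pderiv_sq_root) simp
    moreover have "poly (pderiv P) x = of_nat d * x ^ (d - 1)"
      by (simp add: P_def pderiv_monom poly_monom pderiv_diff)
    ultimately have "x ^ (d - 1) = 0" using dn by simp
    then have "x = 0" by simp
    moreover have "x ^ d = c" using x setA by auto
    ultimately show False using c d0 by (simp add: power_0_left)
  qed
  have "size A = (\<Sum>x\<in>set_mset A. count A x)" by (rule size_multiset_overloaded_eq)
  also have "\<dots> = card (set_mset A)" using cnt by simp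
  finally show "card {z. z ^ d = c} = d" using A(1) degP setA by simp
  have "P = (\<Prod>x\<in>set_mset A. [:-x, 1:] ^ count A x)"
    unfolding PA by (rule image_prod_mset_multiplicity)
  also have "\<dots> = (\<Prod>x\<in>set_mset A. [:-x, 1:])" using cnt by simp
  finally show "(\<Prod>z\<in>{z. z ^ d = c}. [:-z, 1:]) = monom 1 d - [:c:]" using setA P_def by simp
qed

lemma ring_identity3:
  fixes g :: "'b::comm_ring_1"
  assumes "g = a * q" "n = a * n1"
  shows "g - n * F = a * (q - n1 * F)"
  using assms by (simp add: algebra_simps)

lemma const_mult_poly: "[:a * b:] = [:a:] * [:(b::'b::comm_ring_1):]"
  by (simp add: mult.commute)

context curve
begin

lemma E_lemma:
  assumes deg: "degree G < d"
    and H: "\<And>P. affine_pt f d P \<Longrightarrow> fst P = \<alpha> \<Longrightarrow> PhiP P [:[:-\<alpha>, 1:]:] dvd PhiP P G"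
  shows "map_poly (\<lambda>c. poly c \<alpha>) G = 0"
proof (cases "poly f \<alpha> = 0")
  case True
  have "sr \<alpha> dvd PhiP (\<alpha>, 0) G" using H[OF affine_ram[OF True]] by (simp add: PhiP_ram_x)
  then have "fps_X ^ d dvd PhiP (\<alpha>, 0) G" using sr_props(3)[OF True] by (rule dvd_trans[rotated])
  then show ?thesis by (rule ram_divides[OF True deg])
next
  case False
  define S where "S = {z. z ^ d = poly f \<alpha>}"
  have cardS: "card S = d" unfolding S_def by (rule roots_poly_props(1)[OF False chd d0])
  define Gb where "Gb = map_poly (\<lambda>c. poly c \<alpha>) G"
  have root: "poly Gb \<beta> = 0" if "\<beta> \<in> S" for \<beta>
  proof -
    have b: "\<beta> ^ d = poly f \<alpha>" using that by (simp add: S_def)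
    have bnz: "\<beta> \<noteq> 0" using b False d0 by (auto simp: power_0_left)
    have P: "affine_pt f d (\<alpha>, \<beta>)" using b by (simp add: affine_pt_def)
    have "fps_X dvd PhiP (\<alpha>, \<beta>) G" using H[OF P] PhiP_unram_x[OF bnz] by simp
    then have "PhiP (\<alpha>, \<beta>) G $ 0 = 0" by (simp add: X_dvd_iff0)
    then have "eval2 G \<alpha> \<beta> = 0" using PhiP_nth0[OF P] by simp
    then show ?thesis by (simp add: eval2_def Gb_def)
  qed
  show ?thesis
  proof (rule ccontr)
    assume nz: "map_poly (\<lambda>c. poly c \<alpha>) G \<noteq> 0"
    then have Gbnz: "Gb \<noteq> 0" by (simp add: Gb_def)
    have "S \<subseteq> {x. poly Gb x = 0}" using root by auto
    then have "card S \<le> card {x. poly Gb x = 0}"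
      by (intro card_mono poly_roots_finite Gbnz)
    also have "\<dots> \<le> degree Gb" by (rule card_poly_roots_bound[OF Gbnz])
    also have "\<dots> \<le> degree G" unfolding Gb_def by (rule map_poly_degree_leq)
    finally show False using cardS deg by simp
  qed
qed

lemma PhiP_smult_x: "PhiP P (smult [:-\<alpha>, 1:] Q) = PhiP P [:[:-\<alpha>, 1:]:] * PhiP P Q"
  by (simp add: PhiP_def)

lemma div_N:
  "N \<noteq> 0 \<Longrightarrow> degree G < d \<Longrightarrow> (\<And>P. affine_pt f d P \<Longrightarrow> PhiP P [:N:] dvd PhiP P G)
    \<Longrightarrow> \<exists>F. curve_eq f d dvd (G - [:N:] * F)"
proof (induction "degree N" arbitrary: N G rule: less_induct)
  case less
  show ?case
  proof (cases "degree N = 0")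
    case True
    then obtain c where Nc: "N = [:c:]" by (metis degree_eq_zeroE)
    then have c0: "c \<noteq> 0" using less.prems(1) by simp
    have "[:N:] * smult [:inverse c:] G = G" using c0 by (simp add: Nc one_pCons[symmetric])
    then have "curve_eq f d dvd (G - [:N:] * smult [:inverse c:] G)" by simp
    then show ?thesis by blast
  next
    case False
    then obtain \<alpha> where "poly N \<alpha> = 0" using alg_closed_imp_poly_has_root by blast
    then obtain N1 where N1: "N = [:-\<alpha>, 1:] * N1" by (auto simp: poly_eq_0_iff_dvd elim: dvdE)
    have N1nz: "N1 \<noteq> 0" using N1 less.prems(1) by auto
    have e: "degree ([:-\<alpha>, 1:] * N1) = 1 + degree N1"
      using degree_mult_eq[of "[:-\<alpha>, 1:]" N1] N1nz by simp
    have degN: "degree N = 1 + degree N1" by (simp only: N1 e)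
    have splitN: "PhiP P [:N:] = PhiP P [:[:-\<alpha>, 1:]:] * PhiP P [:N1:]" for P
      by (simp only: N1 const_mult_poly PhiP_mult)
    have "map_poly (\<lambda>c. poly c \<alpha>) G = 0"
    proof (rule E_lemma[OF less.prems(2)])
      fix P assume P: "affine_pt f d P" "fst P = \<alpha>"
      show "PhiP P [:[:-\<alpha>, 1:]:] dvd PhiP P G"
        using less.prems(3)[OF P(1)] unfolding splitN by (rule dvd_mult_left)
    qed
    then have GQ: "G = smult [:-\<alpha>, 1:] (map_poly (\<lambda>c. synthetic_div c \<alpha>) G)" by (rule Gbar_zero)
    define Q where "Q = map_poly (\<lambda>c. synthetic_div c \<alpha>) G"
    have GQ': "G = smult [:-\<alpha>, 1:] Q" using GQ by (simp add: Q_def)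
    have degQ: "degree Q < d" using less.prems(2) GQ' by simp
    have "\<exists>F. curve_eq f d dvd (Q - [:N1:] * F)"
    proof (rule less.hyps[OF _ N1nz degQ])
      show "degree N1 < degree N" using degN by simp
      fix P assume P: "affine_pt f d P"
      have nz: "PhiP P [:[:-\<alpha>, 1:]:] \<noteq> 0" using inj[OF P] d0 by simp
      have "PhiP P [:[:-\<alpha>, 1:]:] * PhiP P [:N1:] dvd PhiP P [:[:-\<alpha>, 1:]:] * PhiP P Q"
        using less.prems(3)[OF P] unfolding splitN by (subst (asm) GQ') (simp only: PhiP_smult_x)
      then show "PhiP P [:N1:] dvd PhiP P Q" using nz by simp
    qed
    then obtain F where F: "curve_eq f d dvd (Q - [:N1:] * F)" by blast
    have g1: "G = [:[:-\<alpha>, 1:]:] * Q" using GQ' by simp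
    have g2: "[:N:] = [:[:-\<alpha>, 1:]:] * [:N1:]" by (simp only: N1 const_mult_poly)
    have "G - [:N:] * F = [:[:-\<alpha>, 1:]:] * (Q - [:N1:] * F)"
      by (rule ring_identity3[OF g1 g2])
    then have "curve_eq f d dvd (G - [:N:] * F)" using dvd_mult[OF F, of "[:[:-\<alpha>, 1:]:]"] by (simp only:)
    then show ?thesis by blast
  qed
qed

end


lemma alg_closed_infinite: "infinite (UNIV :: 'a::alg_closed_field set)"
proof
  assume fin: "finite (UNIV :: 'a set)"
  define Q :: "'a poly" where "Q = (\<Prod>x\<in>UNIV. [:-x, 1:])"
  have degQ: "degree Q = card (UNIV :: 'a set)"
    unfolding Q_def by (subst degree_prod_sum_eq) simp_all
  have "card (UNIV :: 'a set) > 0" using fin by (simp add: card_gt_0_iff)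
  then have "degree (1 + Q) > 0" using degQ by (subst degree_add_eq_right) simp_all
  then obtain z where "poly (1 + Q) z = 0" using alg_closed_imp_poly_has_root by blast
  moreover have "poly Q z = 0"
    unfolding Q_def poly_prod using fin by (intro prod_zero) auto
  ultimately show False by simp
qed

lemma poly_eq_nonzero_pts:
  fixes p q :: "'a::alg_closed_field poly"
  assumes "\<And>t. t \<noteq> 0 \<Longrightarrow> poly p t = poly q t"
  shows "p = q"
proof (rule ccontr)
  assume "p \<noteq> q"
  then have nz: "p - q \<noteq> 0" by simp
  have "UNIV - {0} \<subseteq> {t. poly (p - q) t = 0}" using assms by auto
  moreover have "infinite (UNIV - {0::'a})" using alg_closed_infinite by simp
  ultimately have "infinite {t. poly (p - q) t = 0}" using finite_subset by blast
  then show False using poly_roots_finite[OF nz] by simp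
qed

lemma homog_factor:
  fixes q :: "'a::alg_closed_field poly"
  assumes cardS: "card S = d" and prodS: "(\<Prod>z\<in>S. [:-z, 1:]) = monom 1 d + [:\<mu>:]"
  shows "q ^ d + smult \<mu> (monom 1 l ^ d) = (\<Prod>z\<in>S. q - smult z (monom 1 l))"
proof (rule poly_eq_nonzero_pts)
  fix t :: 'a assume t: "t \<noteq> 0"
  define R where "R = t ^ l"
  have R0: "R \<noteq> 0" using t by (simp add: R_def)
  define u where "u = poly q t / R"
  have qt: "poly q t = R * u" using R0 by (simp add: u_def)
  have "poly (\<Prod>z\<in>S. q - smult z (monom 1 l)) t = (\<Prod>z\<in>S. R * (u - z))"
    by (simp add: poly_prod poly_monom qt R_def algebra_simps)
  also have "\<dots> = R ^ card S * (\<Prod>z\<in>S. u - z)" by (simp add: prod.distrib)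
  also have "(\<Prod>z\<in>S. u - z) = poly (\<Prod>z\<in>S. [:-z, 1:]) u" by (simp add: poly_prod)
  also have "\<dots> = u ^ d + \<mu>" by (simp add: prodS poly_monom)
  finally have "poly (\<Prod>z\<in>S. q - smult z (monom 1 l)) t = (R * u) ^ d + \<mu> * R ^ d"
    by (simp add: cardS algebra_simps power_mult_distrib)
  then show "poly (q ^ d + smult \<mu> (monom 1 l ^ d)) t = poly (\<Prod>z\<in>S. q - smult z (monom 1 l)) t"
    by (simp add: qt poly_monom R_def power_mult flip: power_mult_distrib)
qed

lemma prod_degree_bound:
  fixes q :: "'a::field poly"
  assumes fin: "finite S" and degq: "degree q = l"
    and nz: "\<And>z. z \<in> S \<Longrightarrow> q - smult z (monom 1 l) \<noteq> 0"
  shows "(card S - 1) * l \<le> degree (\<Prod>z\<in>S. q - smult z (monom 1 l))"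
proof -
  have "degree (\<Prod>z\<in>S. q - smult z (monom 1 l)) = (\<Sum>z\<in>S. degree (q - smult z (monom 1 l)))"
    using nz by (intro degree_prod_sum_eq) auto
  also have "\<dots> \<ge> (\<Sum>z\<in>S - {lead_coeff q}. degree (q - smult z (monom 1 l)))"
    using fin by (intro sum_mono2) auto
  also have "(\<Sum>z\<in>S - {lead_coeff q}. degree (q - smult z (monom 1 l))) \<ge> card (S - {lead_coeff q}) * l"
  proof -
    have "l \<le> degree (q - smult z (monom 1 l))" if "z \<in> S - {lead_coeff q}" for z
    proof (rule le_degree)
      show "coeff (q - smult z (monom 1 l)) l \<noteq> 0" using that degq by auto
    qed
    then show ?thesis using sum_bounded_below[of "S - {lead_coeff q}" l] by (simp add: mult.commute)
  qed
  moreover have "card S - 1 \<le> card (S - {lead_coeff q})"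
    by (cases "lead_coeff q \<in> S") (simp_all add: card_Diff_singleton fin)
  ultimately show ?thesis
    by (meson le_trans mult_le_mono1)
qed

lemma dvd_power_diff: "(x::'b::comm_ring_1) - y dvd x ^ n - y ^ n"
  using power_diff_sumr2[of x n y] by (metis dvd_triv_left)

lemma degree_power_le': "degree ((q::'a::field poly) ^ n) = n * degree q"
  by (cases "q = 0") (simp_all add: degree_power_eq power_0_left)

context curve
begin

lemma unram_contra:
  assumes b: "b \<noteq> 0" "b ^ d = poly f a"
    and Fdef: "F = pCons p (pCons [:c:] 0)" and Fnz: "F \<noteq> 0" and degp: "degree p \<le> l"
    and dv: "fps_X ^ (d * l) dvd PhiP (a, b) F"
    and n1: "degree f < d * l" and n2: "degree f < (d - 1) * l" and nd: "\<not> d dvd degree f"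
  shows False
proof -
  define m where "m = d * l"
  define ps where "ps = pcompose p [:a, 1:]"
  define fs where "fs = pcompose f [:a, 1:]"
  define Y where "Y = Yu a b"
  have Yd: "Y ^ d = fps_of_poly fs" using Yu_props(1)[OF b] by (simp add: Y_def fs_def evx_shift)
  have PF: "PhiP (a, b) F = fps_of_poly ps + Y * fps_const c"
    using b(1) by (simp add: PhiP_def pX_def pY_def Fdef Phi_pCons evx_shift ps_def Y_def)
  have degps: "degree ps = degree p" by (simp add: ps_def degree_pcompose)
  have degfs: "degree fs = degree f" by (simp add: fs_def degree_pcompose)
  have f0: "f \<noteq> 0" using sqf by (simp add: rsquarefree_def)
  have fs0: "fs \<noteq> 0" using f0 by (simp add: fs_def pcompose_eq_0_iff)
  have l0: "0 < l" using n1 by (cases l) simp_all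
  have lm: "l < m" using d1 l0 by (simp add: m_def)
  show False
  proof (cases "c = 0")
    case True
    have "fps_X ^ m dvd fps_of_poly ps" using dv PF True by (simp add: m_def)
    moreover have "degree ps < m" using degps degp lm by simp
    ultimately have "ps = 0" using fps_of_poly_small by blast
    then have "p = 0" by (simp add: ps_def pcompose_eq_0_iff)
    then show False using Fnz Fdef True by simp
  next
    case False
    define Z where "Z = fps_const c * Y"
    define W where "W = - fps_of_poly ps"
    have "Z - W = PhiP (a, b) F" by (simp add: Z_def W_def PF algebra_simps)
    then have "fps_X ^ m dvd Z - W" using dv by (simp add: m_def)
    moreover have "Z - W dvd Z ^ d - W ^ d" by (rule dvd_power_diff)
    ultimately have "fps_X ^ m dvd Z ^ d - W ^ d" by (rule dvd_trans)
    moreover have "Z ^ d - W ^ d = fps_of_poly (smult (c ^ d) fs - (- ps) ^ d)"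
      by (simp add: Z_def W_def power_mult_distrib Yd fps_of_poly_simps fps_const_power)
    ultimately have dvT: "fps_X ^ m dvd fps_of_poly (smult (c ^ d) fs - (- ps) ^ d)" by simp
    define T where "T = smult (c ^ d) fs - (- ps) ^ d"
    have degT: "degree T \<le> m"
    proof -
      have "degree (smult (c ^ d) fs) \<le> m" using degfs n1 by (simp add: m_def)
      moreover have "degree ((- ps) ^ d) \<le> m"
        using degps degp by (simp add: degree_power_le' m_def)
      ultimately show ?thesis unfolding T_def by (rule degree_diff_le)
    qed
    have Tm: "T = monom (coeff T m) m"
    proof (rule poly_eqI)
      fix k
      show "coeff T k = coeff (monom (coeff T m) m) k"
      proof (cases "k < m")
        case True
        then show ?thesis using dvT by (simp add: Xpow_dvd_iff T_def coeff_monom)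
      next
        case False
        then show ?thesis using degT by (cases "k = m") (simp_all add: coeff_eq_0 coeff_monom)
      qed
    qed
    define \<mu> where "\<mu> = coeff T m"
    define q where "q = - ps"
    have eq: "smult (c ^ d) fs = q ^ d + monom \<mu> m"
      using Tm unfolding T_def \<mu>_def q_def by (simp add: algebra_simps)
    have degq: "degree q = degree p" by (simp add: q_def degps)
    have degL: "degree (smult (c ^ d) fs) = degree f" using False degfs by simp
    show False
    proof (cases "\<mu> = 0")
      case True
      then have "degree f = d * degree q" using eq degL by (simp add: degree_power_le')
      then show False using nd by simp
    next
      case mu: False
      show False
      proof (cases "degree p < l")
        case True
        have "degree (q ^ d) < degree (monom \<mu> m)"
          using True degq d0 mu by (simp add: degree_power_le' degree_monom_eq m_def)
        then have "degree (q ^ d + monom \<mu> m) = m" using mu by (simp add: degree_add_eq_right degree_monom_eq)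
        then show False using eq degL n1 by (simp add: m_def)
      next
        case False
        then have dql: "degree q = l" using degp degq by simp
        define S where "S = {z. z ^ d = - \<mu>}"
        have cardS: "card S = d" unfolding S_def using mu chd d0 by (intro roots_poly_props(1)) simp_all
        have prodS: "(\<Prod>z\<in>S. [:-z, 1:]) = monom 1 d + [:\<mu>:]"
          unfolding S_def using roots_poly_props(2)[of "- \<mu>" d] mu chd d0 by simp
        have "monom \<mu> m = smult \<mu> (monom 1 l ^ d)"
          by (simp add: monom_power m_def smult_monom mult.commute)
        then have eq2: "smult (c ^ d) fs = (\<Prod>z\<in>S. q - smult z (monom 1 l))"
          using eq homog_factor[OF cardS prodS, of q l] by simp
        have finS: "finite S" using cardS d0 by (metis card_ge_0_finite)
        have "smult (c ^ d) fs \<noteq> 0" using fs0 \<open>c \<noteq> 0\<close> by simp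
        then have nzf: "q - smult z (monom 1 l) \<noteq> 0" if "z \<in> S" for z
          using that finS unfolding eq2 by (simp add: prod_zero_iff)
        have "(card S - 1) * l \<le> degree (\<Prod>z\<in>S. q - smult z (monom 1 l))"
          by (rule prod_degree_bound[OF finS dql nzf])
        then show False using eq2 degL cardS n2 by simp
      qed
    qed
  qed
qed

end


lemma wt_inj:
  fixes n d :: nat
  assumes cop: "coprime n d" and j: "j < d" and j': "j' < d"
    and eq: "d * a + n * j = d * b + n * j'"
  shows "j = j'"
proof -
  have main: "j = j'" if le: "j \<le> j'" and e: "d * a + n * j = d * b + n * j'" and jj: "j' < d" for j j' a b
  proof -
    have "n * j' = n * j + n * (j' - j)" using le by (simp add: diff_mult_distrib2)
    then have "d * a = d * b + n * (j' - j)" using e by simp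
    then have "d dvd n * (j' - j)" by (metis dvd_add_right_iff dvd_triv_left)
    then have "d dvd (j' - j)" using cop by (simp add: coprime_dvd_mult_right_iff coprime_commute)
    moreover have "j' - j < d" using jj by simp
    ultimately have "j' - j = 0" by (metis dvd_imp_le not_less neq0_conv)
    then show ?thesis using le by simp
  qed
  show ?thesis
  proof (cases "j \<le> j'")
    case True then show ?thesis using main[OF True eq j'] by simp
  next
    case False then show ?thesis using main[of j' j b a] eq j by simp
  qed
qed

lemma sum_single_nz:
  assumes "finite A" "i0 \<in> A" "\<And>i. i \<in> A \<Longrightarrow> i \<noteq> i0 \<Longrightarrow> g i = 0"
  shows "sum g A = g i0"
proof -
  have "sum g A = g i0 + sum g (A - {i0})" using assms(1,2) by (rule sum.remove)
  also have "sum g (A - {i0}) = 0" using assms(3) by (intro sum.neutral) auto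
  finally show ?thesis by simp
qed

context curve
begin

definition wt :: "'a poly poly \<Rightarrow> nat \<Rightarrow> nat" where
  "wt G j = d * degree (coeff G j) + degree f * j"

lemma pole_set_eq: "{d * degree (coeff G j) + degree f * j | j. coeff G j \<noteq> 0} = wt G ` {j. coeff G j \<noteq> 0}"
  by (auto simp: wt_def)

lemma pole_set_fin: "finite (wt G ` {j. coeff G j \<noteq> 0})"
proof -
  have "{j. coeff G j \<noteq> 0} \<subseteq> {..degree G}" by (auto intro: le_degree)
  then show ?thesis by (intro finite_imageI) (auto intro: finite_subset)
qed

lemma pole_ge: "coeff G j \<noteq> 0 \<Longrightarrow> wt G j \<le> pole_O f d G"
  unfolding pole_O_def pole_set_eq by (intro Max_ge pole_set_fin) auto

lemma pole_attained:
  assumes cop: "coprime (degree f) d" and G: "G \<noteq> 0" "degree G < d"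
  shows "\<exists>j0. coeff G j0 \<noteq> 0 \<and> pole_O f d G = wt G j0 \<and> j0 < d \<and>
     (\<forall>j. coeff G j \<noteq> 0 \<longrightarrow> j \<noteq> j0 \<longrightarrow> wt G j < wt G j0)"
proof -
  have ne: "wt G ` {j. coeff G j \<noteq> 0} \<noteq> {}" using G(1) by (auto intro: exI[of _ "degree G"])
  have "Max (wt G ` {j. coeff G j \<noteq> 0}) \<in> wt G ` {j. coeff G j \<noteq> 0}"
    by (rule Max_in[OF pole_set_fin ne])
  then obtain j0 where j0: "coeff G j0 \<noteq> 0" "pole_O f d G = wt G j0"
    unfolding pole_O_def pole_set_eq by auto
  have lt: "j < d" if "coeff G j \<noteq> 0" for j
    using le_degree[OF that] G(2) by linarith
  have "wt G j < wt G j0" if "coeff G j \<noteq> 0" "j \<noteq> j0" for j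
  proof -
    have "wt G j \<le> wt G j0" using pole_ge[OF that(1)] j0(2) by simp
    moreover have "wt G j \<noteq> wt G j0"
      using wt_inj[OF cop lt[OF that(1)] lt[OF j0(1)]] that(2) unfolding wt_def by blast
    ultimately show ?thesis by simp
  qed
  then show ?thesis using j0 lt by blast
qed

lemma deg_prod_lt:
  fixes A B :: "'a poly"
  assumes "d * (degree A + degree B) < d * e"
  shows "coeff (A * B) e = 0"
proof -
  have "degree (A * B) < e"
    using assms degree_mult_le[of A B] by (meson le_less_trans mult_less_cancel1)
  then show ?thesis by (simp add: coeff_eq_0)
qed

lemma pole_mult_ge:
  assumes cop: "coprime (degree f) d" and monic: "lead_coeff f = 1"
    and F: "F \<noteq> 0" "degree F < d" and h: "h \<noteq> 0" "degree h < d"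
    and g: "degree g < d" and dv: "curve_eq f d dvd (g - F * h)"
  shows "pole_O f d F + pole_O f d h \<le> pole_O f d g"
proof -
  define n where "n = degree f"
  define P where "P = F * h"
  define L where "L = poly_cutoff d P"
  define U where "U = poly_shift d P"
  define g' where "g' = L + [:f:] * U"
  have degP: "degree P \<le> degree F + degree h" unfolding P_def by (rule degree_mult_le)
  have PLU: "P = L + monom 1 d * U"
  proof (rule poly_eqI)
    fix k show "coeff P k = coeff (L + monom 1 d * U) k"
      by (simp add: L_def U_def coeff_poly_cutoff coeff_poly_shift coeff_monom_mult)
  qed
  have "P - g' = curve_eq f d * U" unfolding g'_def curve_eq_def using PLU by (simp add: algebra_simps)
  then have dvg': "curve_eq f d dvd (P - g')" by simp
  have cg': "coeff g' k = (if k < d then coeff P k else 0) + f * coeff P (k + d)" for k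
    by (simp add: g'_def L_def U_def coeff_poly_cutoff coeff_poly_shift)
  have degg': "degree g' < d"
  proof -
    have "coeff g' k = 0" if "k \<ge> d" for k
    proof -
      have "degree P < k + d" using degP F(2) h(2) that by linarith
      then show ?thesis using that by (simp add: cg' coeff_eq_0)
    qed
    then have "degree g' < d \<or> g' = 0"
      by (metis leading_coeff_0_iff not_less)
    then show ?thesis using d0 by auto
  qed
  have "curve_eq f d dvd (g - g')"
  proof -
    have gP: "curve_eq f d dvd (g - P)" using dv by (simp add: P_def)
    have "curve_eq f d dvd (g - P) + (P - g')" using gP dvg' by (rule dvd_add)
    then show ?thesis by simp
  qed
  moreover have "degree (g - g') < d" using g degg' degree_diff_le_max[of g g'] by linarith
  ultimately have gg': "g = g'" using reduced_dvd_zero by fastforce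
  obtain j0 where j0: "coeff F j0 \<noteq> 0" "pole_O f d F = wt F j0" "j0 < d"
    "\<And>j. coeff F j \<noteq> 0 \<Longrightarrow> j \<noteq> j0 \<Longrightarrow> wt F j < wt F j0"
    using pole_attained[OF cop F] by blast
  obtain i0 where i0: "coeff h i0 \<noteq> 0" "pole_O f d h = wt h i0" "i0 < d"
    "\<And>j. coeff h j \<noteq> 0 \<Longrightarrow> j \<noteq> i0 \<Longrightarrow> wt h j < wt h i0"
    using pole_attained[OF cop h] by blast
  define k where "k = j0 + i0"
  define m where "m = (if k < d then k else k - d)"
  define Wt where "Wt = wt F j0 + wt h i0"
  define e0 where "e0 = degree (coeff F j0) + degree (coeff h i0)"
  define e where "e = e0 + (if k < d then 0 else n)"
  have "j0 + i0 < d + d" using j0(3) i0(3) by simp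
  then have md: "m < d" unfolding m_def k_def by (cases "j0 + i0 < d") (simp_all add: less_diff_conv2)
  have Wte: "Wt = d * e + n * m"
  proof (cases "k < d")
    case True
    then show ?thesis by (simp add: Wt_def e_def e0_def m_def wt_def n_def k_def algebra_simps)
  next
    case False
    then have nk: "n * k = n * d + n * (k - d)" by (simp flip: add_mult_distrib2)
    have "Wt = d * e0 + n * k" by (simp add: Wt_def e0_def wt_def n_def k_def algebra_simps)
    then show ?thesis using False nk by (simp add: e_def m_def algebra_simps)
  qed
  have pair: "d * (degree (coeff F i) + degree (coeff h i')) + n * (i + i') < Wt"
    if "coeff F i \<noteq> 0" "coeff h i' \<noteq> 0" "(i, i') \<noteq> (j0, i0)" for i i'
  proof -
    have a: "wt F i \<le> wt F j0" using pole_ge[OF that(1)] j0(2) by simp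
    have b: "wt h i' \<le> wt h i0" using pole_ge[OF that(2)] i0(2) by simp
    have "wt F i < wt F j0 \<or> wt h i' < wt h i0" using that(3) j0(4)[OF that(1)] i0(4)[OF that(2)] by auto
    then have "wt F i + wt h i' < Wt" using a b by (auto simp: Wt_def)
    then show ?thesis by (simp add: wt_def n_def algebra_simps)
  qed
  have cP: "coeff (coeff P k') e' = (\<Sum>i\<le>k'. coeff (coeff F i * coeff h (k' - i)) e')" for k' e'
    by (simp add: P_def coeff_mult coeff_sum)
  have lcprod: "coeff (coeff F j0 * coeff h i0) e0 = lead_coeff (coeff F j0) * lead_coeff (coeff h i0)"
    by (simp add: e0_def lead_coeff_mult[symmetric] degree_mult_eq j0(1) i0(1) del: lead_coeff_mult)
  have lc_nz: "lead_coeff (coeff F j0) * lead_coeff (coeff h i0) \<noteq> 0" using j0(1) i0(1) by simp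
  have partA: "coeff (coeff P m) e = (if k < d then lead_coeff (coeff F j0) * lead_coeff (coeff h i0) else 0)"
  proof -
    have zero: "coeff (coeff F i * coeff h (m - i)) e = 0" if "i \<le> m" "(i, m - i) \<noteq> (j0, i0)" for i
    proof (cases "coeff F i = 0 \<or> coeff h (m - i) = 0")
      case True then show ?thesis by auto
    next
      case False
      then have "d * (degree (coeff F i) + degree (coeff h (m - i))) + n * m < d * e + n * m"
        using pair[of i "m - i"] that Wte by auto
      then show ?thesis by (intro deg_prod_lt) simp
    qed
    show ?thesis
    proof (cases "k < d")
      case True
      then have mk: "m = k" by (simp add: m_def)
      have "coeff (coeff P m) e = coeff (coeff F j0 * coeff h (m - j0)) e"
        unfolding cP by (rule sum_single_nz) (use zero in \<open>auto simp: mk k_def\<close>)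
      then show ?thesis using True lcprod by (simp add: mk k_def e_def)
    next
      case False
      then have "m \<noteq> k" using md by (simp add: m_def)
      then have "coeff (coeff P m) e = 0"
        unfolding cP by (intro sum.neutral ballI zero) (auto simp: k_def)
      then show ?thesis using False by simp
    qed
  qed
  have partB: "coeff (f * coeff P (m + d)) e = (if k < d then 0 else lead_coeff (coeff F j0) * lead_coeff (coeff h i0))"
  proof -
    have fP: "f * coeff P (m + d) = (\<Sum>i\<le>m + d. f * (coeff F i * coeff h (m + d - i)))"
      by (simp add: P_def coeff_mult sum_distrib_left)
    have zero: "coeff (f * (coeff F i * coeff h (m + d - i))) e = 0" if "i \<le> m + d" "(i, m + d - i) \<noteq> (j0, i0)" for i
    proof (cases "coeff F i = 0 \<or> coeff h (m + d - i) = 0")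
      case True then show ?thesis by auto
    next
      case False
      have "d * (degree (coeff F i) + degree (coeff h (m + d - i))) + n * (m + d) < d * e + n * m"
        using pair[of i "m + d - i"] that Wte False by auto
      then have lt: "d * (n + (degree (coeff F i) + degree (coeff h (m + d - i)))) < d * e"
        by (simp add: algebra_simps)
      have "degree (f * (coeff F i * coeff h (m + d - i))) \<le> n + (degree (coeff F i) + degree (coeff h (m + d - i)))"
        unfolding n_def by (meson add_le_mono degree_mult_le le_trans order_refl)
      moreover have "n + (degree (coeff F i) + degree (coeff h (m + d - i))) < e"
        using lt by simp
      ultimately show ?thesis by (simp add: coeff_eq_0)
    qed
    show ?thesis
    proof (cases "k < d")
      case True
      then have "m + d \<noteq> k" by (simp add: m_def)
      then have "coeff (f * coeff P (m + d)) e = 0"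
        unfolding fP coeff_sum by (intro sum.neutral ballI zero) (auto simp: k_def)
      then show ?thesis using True by simp
    next
      case False
      then have mk: "m + d = k" using j0(3) i0(3) by (simp add: m_def k_def)
      have "coeff (f * coeff P (m + d)) e = coeff (f * (coeff F j0 * coeff h (m + d - j0))) e"
        unfolding fP coeff_sum by (rule sum_single_nz) (use zero in \<open>auto simp: mk k_def\<close>)
      also have "\<dots> = lead_coeff f * (lead_coeff (coeff F j0) * lead_coeff (coeff h i0))"
      proof -
        have e': "e = degree f + e0" using False by (simp add: e_def n_def)
        have "coeff (f * (coeff F j0 * coeff h i0)) (degree f + e0) = lead_coeff (f * (coeff F j0 * coeff h i0))"
        proof -
          have f0: "f \<noteq> 0" using monic by auto
          have "degree (f * (coeff F j0 * coeff h i0)) = degree f + e0"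
            using j0(1) i0(1) f0 by (simp add: degree_mult_eq e0_def)
          then show ?thesis by simp
        qed
        then show ?thesis using mk k_def e' by (simp add: lead_coeff_mult)
      qed
      finally show ?thesis using False monic by simp
    qed
  qed
  have cgm: "coeff (coeff g m) e = lead_coeff (coeff F j0) * lead_coeff (coeff h i0)"
    using partA partB md by (simp add: gg' cg')
  then have gm0: "coeff g m \<noteq> 0" using lc_nz by auto
  have "e \<le> degree (coeff g m)" using cgm lc_nz by (intro le_degree) simp
  then have "Wt \<le> wt g m" by (simp add: Wte wt_def n_def)
  also have "\<dots> \<le> pole_O f d g" by (rule pole_ge[OF gm0])
  finally show ?thesis using j0(2) i0(2) by (simp add: Wt_def)
qed

end


context curve
begin

lemma pole_const:
  assumes "c \<noteq> 0"
  shows "pole_O f d [:c:] = d * degree c"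
proof -
  have cc: "coeff [:c:] j \<noteq> 0 \<longleftrightarrow> j = 0" for j using assms by (cases j) simp_all
  have "{d * degree (coeff [:c:] j) + degree f * j | j. coeff [:c:] j \<noteq> 0} = {d * degree c}"
    unfolding cc by auto
  then show ?thesis by (simp add: pole_O_def)
qed

lemma ord_aff_one:
  assumes "affine_pt f d P"
  shows "ord_aff f d P 1 = 0"
  using ord_aff_eq[OF assms] by simp

lemma ord_aff_subdeg:
  assumes P: "affine_pt f d P" and G: "G \<noteq> 0" "degree G < d"
  shows "ord_aff f d P G = subdegree (PhiP P G)"
  using ord_aff_eq[OF P inj[OF P G]] .

lemma principal_None: "principal_mult f d None k"
  unfolding principal_mult_def
  by (rule exI[of _ 1], rule exI[of _ 1]) (simp add: d0)

lemma principal_ram: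
  assumes fa: "poly f a = 0"
  shows "principal_mult f d (Some (a, 0)) d"
  unfolding principal_mult_def
proof (intro exI conjI allI impI)
  let ?g = "[:[:-a, 1:]:] :: 'a poly poly"
  show "?g \<noteq> 0" by simp
  show "(1 :: 'a poly poly) \<noteq> 0" by simp
  show "degree ?g < d" using d0 by simp
  show "degree (1 :: 'a poly poly) < d" using d0 by simp
  fix P assume P: "affine_pt f d P"
  obtain a' b' where Pab: "P = (a', b')" by (cases P)
  have o1: "ord_aff f d P 1 = 0" by (rule ord_aff_one[OF P])
  have og: "ord_aff f d P ?g = subdegree (PhiP P ?g)" using ord_aff_subdeg[OF P] d0 by simp
  show "int (ord_aff f d P ?g) - int (ord_aff f d P 1) = (if Some (a, 0) = Some P then int d else 0)"
  proof (cases "P = (a, 0)")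
    case True
    then show ?thesis using o1 og PhiP_ram_x[of a] sr_props(4)[OF fa] by simp
  next
    case False
    have "a' \<noteq> a"
    proof
      assume "a' = a"
      then have "b' ^ d = 0" using P fa by (simp add: affine_pt_def Pab)
      then have "b' = 0" by simp
      then show False using False \<open>a' = a\<close> by (simp add: Pab)
    qed
    then have "PhiP P ?g $ 0 \<noteq> 0" using PhiP_nth0[OF P] by (simp add: Pab)
    then have "subdegree (PhiP P ?g) = 0" by simp
    then show ?thesis using o1 og False by auto
  qed
next
  show "- int (pole_O f d [:[:-a, 1:]:]) - - int (pole_O f d 1) = (if Some (a, 0) = None then 0 else - int d)"
    using pole_const[of "[:-a, 1:]"] pole_const[of 1] by (simp add: one_pCons[symmetric])
qed

end

theorem mainTheorem2:
  fixes d n :: nat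
  assumes "1 < d" and "d < n" and "coprime n d"
    and "\<not> CHAR('a::alg_closed_field) dvd d"
    and "int n - int (d * ((n + d) div d)) + int ((n + d) div d) < 0"
  shows "\<not> reachable TYPE('a) n d (d * ((n + d) div d))"
proof
  define l where "l = (n + d) div d"
  define m0 where "m0 = d * l"
  have d1: "1 < d" and dn: "d < n" and cop: "coprime n d" using assms by auto
  have chd: "of_nat d \<noteq> (0::'a)" using assms(4) by (simp add: of_nat_eq_0_iff_char_dvd)
  have ineq: "int n + int l < int d * int l" using assms(5) by (simp add: l_def)
  have n2: "n < (d - 1) * l"
  proof -
    have "int n < (int d - 1) * int l" using ineq by (simp add: algebra_simps)
    then show ?thesis using d1 by (simp add: of_nat_diff algebra_simps flip: of_nat_mult of_nat_less_iff)
  qed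
  have l2: "2 \<le> l"
  proof -
    have "d + d \<le> n + d" using dn by simp
    then have "(d + d) div d \<le> (n + d) div d" by (rule div_le_mono)
    then show ?thesis using d1 by (simp add: l_def)
  qed
  have n1: "n < d * l" using ineq by (simp flip: of_nat_mult of_nat_add of_nat_less_iff)
  have ndvd: "\<not> d dvd n"
  proof
    assume "d dvd n"
    then have "d dvd gcd n d" by simp
    then show False using cop d1 by simp
  qed
  have m0lt: "m0 < n + d"
  proof -
    have e: "d * ((n + d) div d) + (n + d) mod d = n + d"
      using div_mult_mod_eq[of "n + d" d] by (simp add: mult.commute)
    have "(n + d) mod d \<noteq> 0" using ndvd by (simp add: dvd_eq_mod_eq_0)
    then show ?thesis using e unfolding m0_def l_def by linarith
  qed
  have dm0: "d < m0" using l2 d1 by (simp add: m0_def)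
  assume "reachable TYPE('a) n d (d * ((n + d) div d))"
  then obtain f :: "'a poly" and Q where f1: "lead_coeff f = 1" and fn: "degree f = n"
    and sqf: "rsquarefree f" and Qc: "curve_point f d Q" and Qo: "point_order f d Q m0"
    unfolding reachable_def m0_def l_def by blast
  interpret curve f d
    using d1 chd sqf fn dn by unfold_locales simp_all
  have m01: "1 < m0" using dm0 d1 by simp
  have minimal: "\<And>k. 0 < k \<Longrightarrow> k < m0 \<Longrightarrow> \<not> principal_mult f d Q k"
    using Qo by (simp add: point_order_def)
  have pm: "principal_mult f d Q m0" using Qo by (simp add: point_order_def)
  show False
  proof (cases Q)
    case None
    then show False using minimal[of 1] m01 principal_None by simp
  next
    case (Some P)
    obtain a b where Pab: "P = (a, b)" by (cases P)
    have Paff: "affine_pt f d (a, b)" using Qc by (simp add: curve_point_def Some Pab)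
    have ab: "b ^ d = poly f a" using Paff by (simp add: affine_pt_def)
    show False
    proof (cases "b = 0")
      case True
      then have fa: "poly f a = 0" using ab d0 by (simp add: power_0_left)
      have "principal_mult f d Q d" using principal_ram[OF fa] by (simp add: Some Pab True)
      then show False using minimal[of d] d0 dm0 by simp
    next
      case False
      from pm obtain g h where gnz: "g \<noteq> 0" and hnz: "h \<noteq> 0" and dg: "degree g < d" and dh: "degree h < d"
        and ordeq: "\<And>P'. affine_pt f d P' \<Longrightarrow>
           int (ord_aff f d P' g) - int (ord_aff f d P' h) = (if Q = Some P' then int m0 else 0)"
        and poleeq: "(- int (pole_O f d g)) - (- int (pole_O f d h)) = (if Q = None then 0 else - int m0)"
        unfolding principal_mult_def by blast
      have pole_gh: "pole_O f d g = pole_O f d h + m0" using poleeq by (simp add: Some)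
      have vle: "subdegree (PhiP P' h) \<le> subdegree (PhiP P' g)" if P': "affine_pt f d P'" for P'
        using ordeq[OF P'] ord_aff_subdeg[OF P' gnz dg] ord_aff_subdeg[OF P' hnz dh]
        by (auto split: if_splits)
      have vP: "subdegree (PhiP (a, b) g) = subdegree (PhiP (a, b) h) + m0"
        using ordeq[OF Paff] ord_aff_subdeg[OF Paff gnz dg] ord_aff_subdeg[OF Paff hnz dh]
        by (simp add: Some Pab)
      obtain H N where Nnz: "N \<noteq> 0" and bz: "curve_eq f d dvd (H * h - [:N:])"
        using bezout[OF hnz dh] by blast
      define G0 where "G0 = red (g * H)"
      have G0c: "curve_eq f d dvd (g * H - G0)" unfolding G0_def by (rule red_props(1))
      have "\<exists>F. curve_eq f d dvd (G0 - [:N:] * F)"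
      proof (rule div_N[OF Nnz])
        show "degree G0 < d" unfolding G0_def by (rule red_props(2))
        fix P' assume P': "affine_pt f d P'"
        have e1: "PhiP P' [:N:] = PhiP P' H * PhiP P' h"
          using PhiP_cong[OF P' bz] by simp
        have e2: "PhiP P' G0 = PhiP P' g * PhiP P' H"
          using PhiP_cong[OF P' G0c] by simp
        have "PhiP P' h dvd PhiP P' g"
          using vle[OF P'] inj[OF P' hnz dh] inj[OF P' gnz dg] by (simp add: fps_dvd_iff)
        then show "PhiP P' [:N:] dvd PhiP P' G0" unfolding e1 e2 by (simp add: mult.commute mult_dvd_mono)
      qed
      then obtain F where F: "curve_eq f d dvd (G0 - [:N:] * F)" by blast
      have gHF: "curve_eq f d dvd (g * H - [:N:] * F)"
        using dvd_add[OF G0c F] by simp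
      have "[:N:] * (F * h - g) = - ((g * H - [:N:] * F) * h) + g * (H * h - [:N:])"
        by (simp add: algebra_simps)
      moreover have "curve_eq f d dvd - ((g * H - [:N:] * F) * h) + g * (H * h - [:N:])"
        by (rule dvd_add, subst dvd_minus_iff, rule dvd_mult2[OF gHF], rule dvd_mult[OF bz])
      ultimately have "curve_eq f d dvd [:N:] * (F * h - g)" by simp
      then have Fhg: "curve_eq f d dvd (F * h - g)" by (rule domain_x[OF Nnz])
      define Fr where "Fr = red F"
      have FrF: "curve_eq f d dvd (F - Fr)" unfolding Fr_def by (rule red_props(1))
      have dFr: "degree Fr < d" unfolding Fr_def by (rule red_props(2))
      have eqx: "Fr * h - g = (F * h - g) - (F - Fr) * h" by (simp add: algebra_simps)
      have Frhg: "curve_eq f d dvd (Fr * h - g)"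
        unfolding eqx by (rule dvd_diff[OF Fhg dvd_mult2[OF FrF]])
      have gFr: "curve_eq f d dvd (g - Fr * h)"
        using Frhg by (metis dvd_minus_iff minus_diff_eq)
      have Frnz: "Fr \<noteq> 0"
      proof
        assume "Fr = 0"
        then have "curve_eq f d dvd g" using gFr by simp
        then show False using reduced_dvd_zero[OF dg] gnz by simp
      qed
      have "pole_O f d Fr + pole_O f d h \<le> pole_O f d g"
        by (rule pole_mult_ge) (use cop fn f1 Frnz dFr hnz dh dg gFr in \<open>simp_all add: coprime_commute\<close>)
      then have poleFr: "pole_O f d Fr \<le> m0" using pole_gh by simp
      have "PhiP (a, b) g = PhiP (a, b) Fr * PhiP (a, b) h"
        using PhiP_cong[OF Paff gFr] by simp
      then have "subdegree (PhiP (a, b) g) = subdegree (PhiP (a, b) Fr) + subdegree (PhiP (a, b) h)"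
        using inj[OF Paff Frnz dFr] inj[OF Paff hnz dh] by simp
      then have "subdegree (PhiP (a, b) Fr) = m0" using vP by simp
      then have XFr: "fps_X ^ (d * l) dvd PhiP (a, b) Fr"
        using inj[OF Paff Frnz dFr] by (simp add: Xpow_dvd_subdeg m0_def)
      have wtb: "d * degree (coeff Fr j) + n * j \<le> m0" if "coeff Fr j \<noteq> 0" for j
        using pole_ge[OF that] poleFr by (simp add: wt_def fn)
      have c2: "coeff Fr j = 0" if "2 \<le> j" for j
      proof (rule ccontr)
        assume "coeff Fr j \<noteq> 0"
        then have "n * j \<le> m0" using wtb by fastforce
        moreover have "n * 2 \<le> n * j" using that by simp
        ultimately show False using m0lt dn by linarith
      qed
      have c1: "degree (coeff Fr 1) = 0"
      proof (rule ccontr)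
        assume nz: "degree (coeff Fr 1) \<noteq> 0"
        then have "coeff Fr 1 \<noteq> 0" by auto
        then have "d * degree (coeff Fr 1) + n \<le> m0" using wtb[of 1] by simp
        moreover have "d \<le> d * degree (coeff Fr 1)" using nz by simp
        ultimately show False using m0lt by linarith
      qed
      have c0: "degree (coeff Fr 0) \<le> l"
      proof (cases "coeff Fr 0 = 0")
        case True then show ?thesis by simp
      next
        case False
        then have "d * degree (coeff Fr 0) \<le> d * l" using wtb[of 0] by (simp add: m0_def)
        then show ?thesis using d0 by simp
      qed
      define p where "p = coeff Fr 0"
      define c where "c = coeff (coeff Fr 1) 0"
      have Frform: "Fr = pCons p (pCons [:c:] 0)"
      proof (rule poly_eqI)
        fix j
        show "coeff Fr j = coeff (pCons p (pCons [:c:] 0)) j"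
        proof (cases j)
          case 0 then show ?thesis by (simp add: p_def)
        next
          case (Suc j')
          show ?thesis
          proof (cases j')
            case 0
            then show ?thesis using Suc c1 by (simp add: c_def) (metis degree_eq_zeroE coeff_pCons_0)
          next
            case (Suc j'')
            then show ?thesis using \<open>j = Suc j'\<close> c2[of j] by simp
          qed
        qed
      qed
      show False
        by (rule unram_contra[OF False ab Frform Frnz _ XFr])
           (use c0 n1 n2 ndvd fn in \<open>simp_all add: p_def\<close>)
    qed
  qed
qed


end
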